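(* Let $T$ be a complete affine $L$-theory and let $M\models T$ be compact (as a metric space). Then every extreme type $p\in E_n(T)$ is realized in $M$.
   Context: Affine continuous logic: structures are complete metric spaces of diameter $\le1$ with Lipschitz interpretations; affine formulas built from atomic $1,d(t_1,t_2),R(\bar t)$ by $+$, real scalars, $\sup$, $\inf$. An $n$-type of $T$ is a positive linear functional $p$ with $p(1)=1$ on the space of affine formulas in $n$ free variables modulo $T$-equivalence (ordered by $0\le\phi$ iff $T\models0\le\inf_{\bar x}\phi$); $K_n(T)$ is the compact convex set of $n$-types, $E_n(T)$ its set of extreme points. $\bar a\in M$ realizes $p$ if $p(\phi)=\phi^M(\bar a)$ for all $\phi$. *)

theory Defs
  imports "HOL-Analysis.Analysis"
begin

record ('f, 'r) lang =
  farity :: "'f \<Rightarrow> nat"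
  rarity :: "'r \<Rightarrow> nat"
  flip   :: "'f \<Rightarrow> real"
  rlip   :: "'r \<Rightarrow> real"

datatype 'f trm = Var nat | Fn 'f "'f trm list"

datatype ('f, 'r) fml =
    One
  | Dist "'f trm" "'f trm"
  | Rel 'r "'f trm list"
  | Plus "('f, 'r) fml" "('f, 'r) fml"
  | Scale real "('f, 'r) fml"
  | Sup nat "('f, 'r) fml"
  | Inf nat "('f, 'r) fml"

fun wf_trm :: "('f, 'r, 'z) lang_scheme \<Rightarrow> 'f trm \<Rightarrow> bool" where
  "wf_trm L (Var i) = True"
| "wf_trm L (Fn f ts) = (length ts = farity L f \<and> (\<forall>t\<in>set ts. wf_trm L t))"

fun wf_fml :: "('f, 'r, 'z) lang_scheme \<Rightarrow> ('f, 'r) fml \<Rightarrow> bool" where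
  "wf_fml L One = True"
| "wf_fml L (Dist s t) = (wf_trm L s \<and> wf_trm L t)"
| "wf_fml L (Rel R ts) = (length ts = rarity L R \<and> (\<forall>t\<in>set ts. wf_trm L t))"
| "wf_fml L (Plus \<phi> \<psi>) = (wf_fml L \<phi> \<and> wf_fml L \<psi>)"
| "wf_fml L (Scale r \<phi>) = wf_fml L \<phi>"
| "wf_fml L (Sup x \<phi>) = wf_fml L \<phi>"
| "wf_fml L (Inf x \<phi>) = wf_fml L \<phi>"

fun tvars :: "'f trm \<Rightarrow> nat set" where
  "tvars (Var i) = {i}"
| "tvars (Fn f ts) = (\<Union>t\<in>set ts. tvars t)"

fun fv :: "('f, 'r) fml \<Rightarrow> nat set" where
  "fv One = {}"
| "fv (Dist s t) = tvars s \<union> tvars t"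
| "fv (Rel R ts) = (\<Union>t\<in>set ts. tvars t)"
| "fv (Plus \<phi> \<psi>) = fv \<phi> \<union> fv \<psi>"
| "fv (Scale r \<phi>) = fv \<phi>"
| "fv (Sup x \<phi>) = fv \<phi> - {x}"
| "fv (Inf x \<phi>) = fv \<phi> - {x}"

definition fmls :: "('f, 'r, 'z) lang_scheme \<Rightarrow> nat \<Rightarrow> ('f, 'r) fml set" where
  "fmls L n = {\<phi>. wf_fml L \<phi> \<and> fv \<phi> \<subseteq> {..<n}}"

definition sentences :: "('f, 'r, 'z) lang_scheme \<Rightarrow> ('f, 'r) fml set" where
  "sentences L = fmls L 0"

fun infs :: "nat \<Rightarrow> ('f, 'r) fml \<Rightarrow> ('f, 'r) fml" where
  "infs 0 \<phi> = \<phi>"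
| "infs (Suc n) \<phi> = infs n (Inf n \<phi>)"

record ('a, 'f, 'r) struc =
  univ :: "'a set"
  fint :: "'f \<Rightarrow> 'a list \<Rightarrow> 'a"
  rint :: "'r \<Rightarrow> 'a list \<Rightarrow> real"

definition list_dist :: "'a::metric_space list \<Rightarrow> 'a list \<Rightarrow> real" where
  "list_dist as bs = (\<Sum>i<length as. dist (as ! i) (bs ! i))"

definition is_structure ::
  "('f, 'r, 'z) lang_scheme \<Rightarrow> ('a::metric_space, 'f, 'r, 'w) struc_scheme \<Rightarrow> bool" where
  "is_structure L M \<longleftrightarrow>
     univ M \<noteq> {} \<and> complete (univ M) \<and>
     (\<forall>x\<in>univ M. \<forall>y\<in>univ M. dist x y \<le> 1) \<and>
     (\<forall>f as. length as = farity L f \<and> set as \<subseteq> univ M \<longrightarrow> fint M f as \<in> univ M) \<and>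
     (\<forall>f as bs. length as = farity L f \<and> length bs = farity L f \<and>
        set as \<subseteq> univ M \<and> set bs \<subseteq> univ M \<longrightarrow>
        dist (fint M f as) (fint M f bs) \<le> flip L f * list_dist as bs) \<and>
     (\<forall>R as bs. length as = rarity L R \<and> length bs = rarity L R \<and>
        set as \<subseteq> univ M \<and> set bs \<subseteq> univ M \<longrightarrow>
        \<bar>rint M R as - rint M R bs\<bar> \<le> rlip L R * list_dist as bs)"

fun teval :: "('a, 'f, 'r, 'w) struc_scheme \<Rightarrow> (nat \<Rightarrow> 'a) \<Rightarrow> 'f trm \<Rightarrow> 'a" where
  "teval M \<sigma> (Var i) = \<sigma> i"
| "teval M \<sigma> (Fn f ts) = fint M f (map (teval M \<sigma>) ts)"

fun eval :: "('a::metric_space, 'f, 'r, 'w) struc_scheme \<Rightarrow> (nat \<Rightarrow> 'a) \<Rightarrow> ('f, 'r) fml \<Rightarrow> real" where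
  "eval M \<sigma> One = 1"
| "eval M \<sigma> (Dist s t) = dist (teval M \<sigma> s) (teval M \<sigma> t)"
| "eval M \<sigma> (Rel R ts) = rint M R (map (teval M \<sigma>) ts)"
| "eval M \<sigma> (Plus \<phi> \<psi>) = eval M \<sigma> \<phi> + eval M \<sigma> \<psi>"
| "eval M \<sigma> (Scale r \<phi>) = r * eval M \<sigma> \<phi>"
| "eval M \<sigma> (Sup x \<phi>) = (SUP a\<in>univ M. eval M (\<sigma>(x := a)) \<phi>)"
| "eval M \<sigma> (Inf x \<phi>) = (INF a\<in>univ M. eval M (\<sigma>(x := a)) \<phi>)"

text \<open>A complete affine L-theory is represented by the value it assigns to every
  affine L-sentence (the maximal set of closed conditions sigma = r).\<close>
definition models ::
  "('f, 'r, 'z) lang_scheme \<Rightarrow> ('a::metric_space, 'f, 'r, 'w) struc_scheme \<Rightarrow> (('f, 'r) fml \<Rightarrow> real) \<Rightarrow> bool" where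
  "models L M T \<longleftrightarrow> is_structure L M \<and>
     (\<forall>\<sigma>\<in>sentences L. \<forall>s. (\<forall>i. s i \<in> univ M) \<longrightarrow> eval M s \<sigma> = T \<sigma>)"

text \<open>The order on formulas in n variables: 0 <= phi iff T |= 0 <= inf_x phi;
  for a complete theory T this means that the sentence inf_x phi has value >= 0.\<close>
definition T_nonneg :: "(('f, 'r) fml \<Rightarrow> real) \<Rightarrow> nat \<Rightarrow> ('f, 'r) fml \<Rightarrow> bool" where
  "T_nonneg T n \<phi> \<longleftrightarrow> 0 \<le> T (infs n \<phi>)"

text \<open>K_n(T): positive linear functionals p with p(1) = 1 on the affine formulas in
  n free variables (modulo T-equivalence; positivity plus linearity makes p
  automatically constant on T-equivalence classes).\<close>
definition types ::
  "('f, 'r, 'z) lang_scheme \<Rightarrow> (('f, 'r) fml \<Rightarrow> real) \<Rightarrow> nat \<Rightarrow> (('f, 'r) fml \<Rightarrow> real) set" where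
  "types L T n = {p.
     (\<forall>\<phi>. \<phi> \<notin> fmls L n \<longrightarrow> p \<phi> = 0) \<and>
     p One = 1 \<and>
     (\<forall>\<phi>\<in>fmls L n. \<forall>\<psi>\<in>fmls L n. p (Plus \<phi> \<psi>) = p \<phi> + p \<psi>) \<and>
     (\<forall>r. \<forall>\<phi>\<in>fmls L n. p (Scale r \<phi>) = r * p \<phi>) \<and>
     (\<forall>\<phi>\<in>fmls L n. T_nonneg T n \<phi> \<longrightarrow> 0 \<le> p \<phi>)}"

definition extreme_pt :: "('b \<Rightarrow> real) set \<Rightarrow> ('b \<Rightarrow> real) \<Rightarrow> bool" where
  "extreme_pt K p \<longleftrightarrow> p \<in> K \<and>
     (\<forall>q\<in>K. \<forall>r\<in>K. \<forall>t::real. 0 < t \<and> t < 1 \<and> p = (\<lambda>\<phi>. t * q \<phi> + (1 - t) * r \<phi>) \<longrightarrow> q = r)"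

definition extreme_types ::
  "('f, 'r, 'z) lang_scheme \<Rightarrow> (('f, 'r) fml \<Rightarrow> real) \<Rightarrow> nat \<Rightarrow> (('f, 'r) fml \<Rightarrow> real) set" where
  "extreme_types L T n = {p. extreme_pt (types L T n) p}"

definition realizes ::
  "('f, 'r, 'z) lang_scheme \<Rightarrow> ('a::metric_space, 'f, 'r, 'w) struc_scheme \<Rightarrow> nat \<Rightarrow> (nat \<Rightarrow> 'a) \<Rightarrow> (('f, 'r) fml \<Rightarrow> real) \<Rightarrow> bool" where
  "realizes L M n a p \<longleftrightarrow> (\<forall>i. a i \<in> univ M) \<and> (\<forall>\<phi>\<in>fmls L n. p \<phi> = eval M a \<phi>)"

end

theory Submission
  imports Defs
begin

definition HBvalid where
  "HBvalid W S P f G \<longleftrightarrow>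
     (\<forall>(a,s)\<in>G. a \<in> W \<and> s \<le> P a) \<and>
     (\<forall>(a,s)\<in>G. \<forall>(b,t)\<in>G. ((\<lambda>i. a i + b i), s + t) \<in> G) \<and>
     (\<forall>(a,s)\<in>G. \<forall>c. ((\<lambda>i. c * a i), c * s) \<in> G) \<and>
     (\<forall>a\<in>S. (a, f a) \<in> G)"

lemma HBvalidI:
  assumes "\<And>a s. (a,s) \<in> G \<Longrightarrow> a \<in> W \<and> s \<le> P a"
    and "\<And>a s b t. (a,s) \<in> G \<Longrightarrow> (b,t) \<in> G \<Longrightarrow> ((\<lambda>i. a i + b i), s + t) \<in> G"
    and "\<And>a s c. (a,s) \<in> G \<Longrightarrow> ((\<lambda>i. c * a i), c * s) \<in> G"
    and "\<And>a. a \<in> S \<Longrightarrow> (a, f a) \<in> G"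
  shows "HBvalid W S P f G"
  using assms unfolding HBvalid_def by auto

lemma HB:
  fixes W S :: "('x \<Rightarrow> real) set" and P f :: "('x \<Rightarrow> real) \<Rightarrow> real"
  assumes Wadd: "\<And>a b. a \<in> W \<Longrightarrow> b \<in> W \<Longrightarrow> (\<lambda>i. a i + b i) \<in> W"
    and Wsc: "\<And>c a. a \<in> W \<Longrightarrow> (\<lambda>i. c * a i) \<in> W"
    and Sadd: "\<And>a b. a \<in> S \<Longrightarrow> b \<in> S \<Longrightarrow> (\<lambda>i. a i + b i) \<in> S"
    and Ssc: "\<And>c a. a \<in> S \<Longrightarrow> (\<lambda>i. c * a i) \<in> S"
    and S0: "(\<lambda>i. 0) \<in> S"
    and SW: "S \<subseteq> W"
    and fadd: "\<And>a b. a \<in> S \<Longrightarrow> b \<in> S \<Longrightarrow> f (\<lambda>i. a i + b i) = f a + f b"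
    and fsc: "\<And>c a. a \<in> S \<Longrightarrow> f (\<lambda>i. c * a i) = c * f a"
    and Padd: "\<And>a b. a \<in> W \<Longrightarrow> b \<in> W \<Longrightarrow> P (\<lambda>i. a i + b i) \<le> P a + P b"
    and Psc: "\<And>c a. a \<in> W \<Longrightarrow> 0 \<le> c \<Longrightarrow> P (\<lambda>i. c * a i) = c * P a"
    and dom: "\<And>a. a \<in> S \<Longrightarrow> f a \<le> P a"
  shows "\<exists>g. (\<forall>a\<in>W. \<forall>b\<in>W. g (\<lambda>i. a i + b i) = g a + g b) \<and>
             (\<forall>c. \<forall>a\<in>W. g (\<lambda>i. c * a i) = c * g a) \<and>
             (\<forall>a\<in>S. g a = f a) \<and> (\<forall>a\<in>W. g a \<le> P a)"
proof -
  let ?A = "{G. HBvalid W S P f G}"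
  define G0 where "G0 = {(a, f a) | a. a \<in> S}"
  have G0: "G0 \<in> ?A"
    unfolding HBvalid_def G0_def using SW dom Sadd Ssc fadd fsc by (auto simp: subset_iff)
  have "\<exists>M\<in>?A. \<forall>X\<in>?A. M \<subseteq> X \<longrightarrow> X = M"
  proof (rule Zorn_Lemma2, intro ballI)
    fix C assume C: "C \<in> chains ?A"
    show "\<exists>U\<in>?A. \<forall>X\<in>C. X \<subseteq> U"
    proof (cases "C = {}")
      case True then show ?thesis using G0 by auto
    next
      case False
      have CA: "\<And>X. X \<in> C \<Longrightarrow> HBvalid W S P f X" using C by (auto simp: chains_def)
      have ch: "\<And>X Y. X \<in> C \<Longrightarrow> Y \<in> C \<Longrightarrow> X \<subseteq> Y \<or> Y \<subseteq> X"
        using C by (auto simp: chains_def chain_subset_def)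
      have "HBvalid W S P f (\<Union>C)"
        unfolding HBvalid_def
      proof (intro conjI)
        show "\<forall>(a, s)\<in>\<Union>C. a \<in> W \<and> s \<le> P a" using CA unfolding HBvalid_def by blast
        show "\<forall>(a, s)\<in>\<Union>C. \<forall>(b, t)\<in>\<Union>C. (\<lambda>i. a i + b i, s + t) \<in> \<Union>C"
        proof (clarsimp)
          fix a s b t X Y assume "(a,s) \<in> X" "X \<in> C" "(b,t) \<in> Y" "Y \<in> C"
          then show "\<exists>Z\<in>C. (\<lambda>i. a i + b i, s + t) \<in> Z"
            using ch[of X Y] CA[of X] CA[of Y] unfolding HBvalid_def by blast
        qed
        show "\<forall>(a, s)\<in>\<Union>C. \<forall>c. (\<lambda>i. c * a i, c * s) \<in> \<Union>C"
          using CA unfolding HBvalid_def by blast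
        show "\<forall>a\<in>S. (a, f a) \<in> \<Union>C" using CA False unfolding HBvalid_def by blast
      qed
      then show ?thesis by auto
    qed
  qed
  then obtain G where GA: "HBvalid W S P f G" and Gmax: "\<And>X. HBvalid W S P f X \<Longrightarrow> G \<subseteq> X \<Longrightarrow> X = G"
    by auto
  have G1: "\<And>a s. (a,s) \<in> G \<Longrightarrow> a \<in> W \<and> s \<le> P a"
    and G2: "\<And>a s b t. (a,s) \<in> G \<Longrightarrow> (b,t) \<in> G \<Longrightarrow> ((\<lambda>i. a i + b i), s + t) \<in> G"
    and G3: "\<And>a s c. (a,s) \<in> G \<Longrightarrow> ((\<lambda>i. c * a i), c * s) \<in> G"
    and G4: "\<And>a. a \<in> S \<Longrightarrow> (a, f a) \<in> G"
    using GA unfolding HBvalid_def by blast+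
  have G00: "((\<lambda>i. 0), 0) \<in> G" using G4[OF S0] G3[of "\<lambda>i. 0" "f (\<lambda>i. 0)" 0] by simp
  have P0: "P (\<lambda>i. 0) = 0" using Psc[of "\<lambda>i. 0" 0] SW S0 by auto
  have func: "s = t" if "(a,s) \<in> G" "(a,t) \<in> G" for a s t
  proof -
    have "((\<lambda>i. a i + (-1) * a i), s + (-1) * t) \<in> G" using G2[OF that(1) G3[OF that(2), of "-1"]] by simp
    then have "((\<lambda>i. 0), s - t) \<in> G" by simp
    then have "s - t \<le> 0" using G1 P0 by fastforce
    moreover have "((\<lambda>i. a i + (-1) * a i), t + (-1) * s) \<in> G" using G2[OF that(2) G3[OF that(1), of "-1"]] by simp
    then have "((\<lambda>i. 0), t - s) \<in> G" by simp
    then have "t - s \<le> 0" using G1 P0 by fastforce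
    ultimately show ?thesis by simp
  qed
  have full: "\<exists>s. (a0, s) \<in> G" if a0W: "a0 \<in> W" for a0
  proof (rule ccontr)
    assume nd: "\<nexists>s. (a0, s) \<in> G"
    define E where "E = {s - P (\<lambda>i. a i - a0 i) | a s. (a,s) \<in> G}"
    have key: "r - P (\<lambda>i. b i - a0 i) \<le> P (\<lambda>i. a i + a0 i) - s" if "(a,s) \<in> G" "(b,r) \<in> G" for a s b r
    proof -
      have "r + s \<le> P (\<lambda>i. b i + a i)" using G1[OF G2[OF that(2) that(1)]] by simp
      also have "(\<lambda>i. b i + a i) = (\<lambda>i. (\<lambda>i. b i - a0 i) i + (\<lambda>i. a i + a0 i) i)" by auto
      also have "P \<dots> \<le> P (\<lambda>i. b i - a0 i) + P (\<lambda>i. a i + a0 i)"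
      proof (rule Padd)
        have "(\<lambda>i. b i + (-1) * a0 i) \<in> W" using Wadd[OF _ Wsc[OF a0W]] G1[OF that(2)] by blast
        then show "(\<lambda>i. b i - a0 i) \<in> W" by simp
        show "(\<lambda>i. a i + a0 i) \<in> W" using Wadd[OF _ a0W] G1[OF that(1)] by blast
      qed
      finally show ?thesis by simp
    qed
    have Ene: "E \<noteq> {}" using G00 unfolding E_def by blast
    have Ebdd: "bdd_above E" unfolding E_def bdd_above_def using key[OF G00] by blast
    define c where "c = Sup_class.Sup E"
    have cup: "c \<le> P (\<lambda>i. a i + a0 i) - s" if "(a,s) \<in> G" for a s
      unfolding c_def using Ene key[OF that] by (auto intro!: cSup_least simp: E_def)
    have clow: "s - P (\<lambda>i. a i - a0 i) \<le> c" if "(a,s) \<in> G" for a s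
      unfolding c_def using Ebdd that by (auto intro!: cSup_upper simp: E_def)
    define G' where "G' = {((\<lambda>i. a i + t * a0 i), s + t * c) | a s t. (a,s) \<in> G}"
    have G'_iff: "z \<in> G' \<longleftrightarrow> (\<exists>a s t. (a,s) \<in> G \<and> z = ((\<lambda>i. a i + t * a0 i), s + t * c))" for z
      unfolding G'_def by blast
    have "HBvalid W S P f G'"
    proof (rule HBvalidI)
      show "x \<in> W \<and> s' \<le> P x" if "(x, s') \<in> G'" for x s'
      proof -
        from that obtain a s t where as: "(a,s) \<in> G" and xe: "x = (\<lambda>i. a i + t * a0 i)" and se: "s' = s + t * c"
          unfolding G'_iff by blast
        have "(\<lambda>i. a i + t * a0 i) \<in> W \<and> s + t * c \<le> P (\<lambda>i. a i + t * a0 i)"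
        proof
          show "(\<lambda>i. a i + t * a0 i) \<in> W" using Wadd[OF _ Wsc[OF a0W]] G1[OF as] by blast
          consider "t = 0" | "t > 0" | "t < 0" by linarith
          then show "s + t * c \<le> P (\<lambda>i. a i + t * a0 i)"
          proof cases
            case 1 then show ?thesis using G1[OF as] by simp
          next
            case 2
            have "((\<lambda>i. (1/t) * a i), (1/t) * s) \<in> G" using G3[OF as] .
            from cup[OF this] have "c \<le> P (\<lambda>i. (1/t) * a i + a0 i) - s / t" by simp
            then have "t * c \<le> t * P (\<lambda>i. (1/t) * a i + a0 i) - s" using 2
              by (simp add: field_simps)
            also have "t * P (\<lambda>i. (1/t) * a i + a0 i) = P (\<lambda>i. t * ((1/t) * a i + a0 i))"
            proof (rule Psc[symmetric])
              show "(\<lambda>i. 1 / t * a i + a0 i) \<in> W" using Wadd[OF Wsc[OF G1[OF as, THEN conjunct1]] a0W] .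
            qed (use 2 in auto)
            also have "(\<lambda>i. t * ((1/t) * a i + a0 i)) = (\<lambda>i. a i + t * a0 i)" using 2
              by (auto simp: field_simps)
            finally show ?thesis by simp
          next
            case 3
            define m where "m = - t"
            have m: "m > 0" using 3 by (simp add: m_def)
            have "((\<lambda>i. (1/m) * a i), (1/m) * s) \<in> G" using G3[OF as] .
            from clow[OF this] have "s / m - c \<le> P (\<lambda>i. (1/m) * a i - a0 i)" by simp
            then have "s - m * c \<le> m * P (\<lambda>i. (1/m) * a i - a0 i)" using m
              by (simp add: field_simps)
            also have "m * P (\<lambda>i. (1/m) * a i - a0 i) = P (\<lambda>i. m * ((1/m) * a i - a0 i))"
            proof (rule Psc[symmetric])
              have "(\<lambda>i. 1 / m * a i + (-1) * a0 i) \<in> W"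
                using Wadd[OF Wsc[OF G1[OF as, THEN conjunct1]] Wsc[OF a0W]] .
              then show "(\<lambda>i. 1 / m * a i - a0 i) \<in> W" by simp
            qed (use m in auto)
            also have "(\<lambda>i. m * ((1/m) * a i - a0 i)) = (\<lambda>i. a i + t * a0 i)" using m
              by (auto simp: field_simps m_def)
            finally show ?thesis by (simp add: m_def)
          qed
        qed
        then show ?thesis using xe se by simp
      qed
      show "(\<lambda>i. x i + y i, s' + v) \<in> G'" if "(x,s') \<in> G'" "(y,v) \<in> G'" for x s' y v
      proof -
        define z1 z2 where "z1 = (x,s')" and "z2 = (y,v)"
        have "z1 \<in> G'" "z2 \<in> G'" using that z1_def z2_def by auto
        then obtain a s t b r u where h1: "(a,s) \<in> G" "z1 = ((\<lambda>i. a i + t * a0 i), s + t * c)"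
          and h2: "(b,r) \<in> G" "z2 = ((\<lambda>i. b i + u * a0 i), r + u * c)"
          unfolding G'_iff by blast
        have "((\<lambda>i. a i + t * a0 i + (b i + u * a0 i)), s + t * c + (r + u * c)) \<in> G'"
          unfolding G'_iff
          by (rule exI[of _ "\<lambda>i. a i + b i"], rule exI[of _ "s + r"], rule exI[of _ "t + u"])
            (use G2[OF h1(1) h2(1)] in \<open>auto simp: fun_eq_iff algebra_simps\<close>)
        then show ?thesis
          using h1 h2 z1_def z2_def by simp
      qed
      show "(\<lambda>i. d * x i, d * s') \<in> G'" if "(x,s') \<in> G'" for x s' d
      proof -
        define z1 where "z1 = (x,s')"
        have "z1 \<in> G'" using that z1_def by auto
        then obtain a s t where h1: "(a,s) \<in> G" "z1 = ((\<lambda>i. a i + t * a0 i), s + t * c)"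
          unfolding G'_iff by blast
        have "((\<lambda>i. d * (a i + t * a0 i)), d * (s + t * c)) \<in> G'"
          unfolding G'_iff
          by (rule exI[of _ "\<lambda>i. d * a i"], rule exI[of _ "d * s"], rule exI[of _ "d * t"])
            (use G3[OF h1(1)] in \<open>auto simp: fun_eq_iff algebra_simps\<close>)
        then show ?thesis
          using h1 z1_def by simp
      qed
      show "(a, f a) \<in> G'" if "a \<in> S" for a
      proof -
        from that have "(a, f a) \<in> G" by (rule G4)
        then show "(a, f a) \<in> G'" unfolding G'_def by force
      qed
    qed
    moreover have "G \<subseteq> G'" unfolding G'_def by force
    ultimately have "G' = G" by (rule Gmax)
    moreover have "(a0, c) \<in> G'" unfolding G'_def using G00 by force
    ultimately show False using nd by auto
  qed
  define g where "g a = (SOME s. (a, s) \<in> G)" for a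
  have gG: "(a, g a) \<in> G" if "a \<in> W" for a
    unfolding g_def using full[OF that] by (rule someI_ex)
  have gval: "g a = s" if "(a,s) \<in> G" for a s
    using func[OF that gG] G1[OF that] by auto
  show ?thesis
  proof (intro exI[of _ g] conjI ballI allI)
    fix a b assume "a \<in> W" "b \<in> W"
    then show "g (\<lambda>i. a i + b i) = g a + g b" using gval[OF G2[OF gG gG]] by blast
  next
    fix c a assume "a \<in> W"
    then show "g (\<lambda>i. c * a i) = c * g a" using gval[OF G3[OF gG]] by blast
  next
    fix a assume "a \<in> S" then show "g a = f a" using gval[OF G4] by blast
  next
    fix a assume "a \<in> W" then show "g a \<le> P a" using G1[OF gG] by blast
  qed
qed

lemma teval_in:
  assumes "is_structure L M" "\<forall>i. s i \<in> univ M"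
  shows "wf_trm L t \<Longrightarrow> teval M s t \<in> univ M"
proof (induction t)
  case (Var i) thus ?case using assms by simp
next
  case (Fn f ts)
  have "set (map (teval M s) ts) \<subseteq> univ M" using Fn by auto
  then show ?case using assms(1) Fn.prems unfolding is_structure_def by auto
qed

lemma list_dist_nonneg: "0 \<le> list_dist as bs"
  unfolding list_dist_def by (simp add: sum_nonneg)

lemma list_dist_le:
  assumes "length as = length bs" "set as \<subseteq> U" "set bs \<subseteq> U" "\<forall>x\<in>U. \<forall>y\<in>U. dist x y \<le> 1"
  shows "list_dist as bs \<le> length as"
proof -
  have "list_dist as bs \<le> (\<Sum>i<length as. 1)"
    unfolding list_dist_def
  proof (rule sum_mono)
    fix i assume "i \<in> {..<length as}"
    then have "as ! i \<in> U" "bs ! i \<in> U" using assms(1-3) nth_mem by (auto simp: subset_iff)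
    then show "dist (as ! i) (bs ! i) \<le> 1" using assms(4) by auto
  qed
  then show ?thesis by simp
qed

lemma list_dist_map_le:
  assumes "\<And>j. j < length ts \<Longrightarrow> dist (F (ts!j)) (G (ts!j)) \<le> Cf (ts!j) * D"
  shows "list_dist (map F ts) (map G ts) \<le> (\<Sum>j<length ts. Cf (ts!j)) * D"
  unfolding list_dist_def sum_distrib_right using assms by (auto intro!: sum_mono)

lemma abs_SUP_le:
  fixes f :: "'b \<Rightarrow> real"
  assumes "A \<noteq> {}" "\<And>a. a \<in> A \<Longrightarrow> \<bar>f a\<bar> \<le> B"
  shows "\<bar>SUP a\<in>A. f a\<bar> \<le> B"
proof -
  obtain a0 where a0: "a0 \<in> A" using assms(1) by auto
  have bdd: "bdd_above (f ` A)" using assms(2) by (intro bdd_aboveI2[where M=B]) (auto simp: abs_le_iff)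
  have "(SUP a\<in>A. f a) \<le> B" using assms by (intro cSUP_least) (auto simp: abs_le_iff)
  moreover have "f a0 \<le> (SUP a\<in>A. f a)" using a0 bdd by (rule cSUP_upper)
  ultimately show ?thesis using assms(2)[OF a0] by (auto simp: abs_le_iff)
qed

lemma abs_INF_le:
  fixes f :: "'b \<Rightarrow> real"
  assumes "A \<noteq> {}" "\<And>a. a \<in> A \<Longrightarrow> \<bar>f a\<bar> \<le> B"
  shows "\<bar>INF a\<in>A. f a\<bar> \<le> B"
proof -
  obtain a0 where a0: "a0 \<in> A" using assms(1) by auto
  have bdd: "bdd_below (f ` A)"
  proof (rule bdd_belowI2[where m="-B"])
    fix x assume "x \<in> A" then show "-B \<le> f x" using assms(2)[of x] by (auto simp: abs_le_iff)
  qed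
  have "-B \<le> (INF a\<in>A. f a)"
  proof (rule cINF_greatest[OF assms(1)])
    fix x assume "x \<in> A" then show "-B \<le> f x" using assms(2)[of x] by (auto simp: abs_le_iff)
  qed
  moreover have "(INF a\<in>A. f a) \<le> f a0" by (rule cINF_lower[OF bdd a0])
  ultimately show ?thesis using assms(2)[OF a0] by (auto simp: abs_le_iff)
qed

lemma SUP_diff_le:
  fixes f g :: "'b \<Rightarrow> real"
  assumes "A \<noteq> {}" "\<And>a. a \<in> A \<Longrightarrow> \<bar>f a\<bar> \<le> B1" "\<And>a. a \<in> A \<Longrightarrow> \<bar>g a\<bar> \<le> B2"
    "\<And>a. a \<in> A \<Longrightarrow> \<bar>f a - g a\<bar> \<le> e"
  shows "\<bar>(SUP a\<in>A. f a) - (SUP a\<in>A. g a)\<bar> \<le> e"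
proof -
  have bf: "bdd_above (f ` A)" using assms(2) by (intro bdd_aboveI2[where M=B1]) (auto simp: abs_le_iff)
  have bg: "bdd_above (g ` A)" using assms(3) by (intro bdd_aboveI2[where M=B2]) (auto simp: abs_le_iff)
  have "(SUP a\<in>A. f a) \<le> (SUP a\<in>A. g a) + e"
  proof (rule cSUP_least[OF assms(1)])
    fix a assume a: "a \<in> A"
    have "g a \<le> (SUP a\<in>A. g a)" using a bg by (rule cSUP_upper)
    then show "f a \<le> (SUP a\<in>A. g a) + e" using assms(4)[OF a] by (auto simp: abs_le_iff)
  qed
  moreover have "(SUP a\<in>A. g a) \<le> (SUP a\<in>A. f a) + e"
  proof (rule cSUP_least[OF assms(1)])
    fix a assume a: "a \<in> A"
    have "f a \<le> (SUP a\<in>A. f a)" using a bf by (rule cSUP_upper)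
    then show "g a \<le> (SUP a\<in>A. f a) + e" using assms(4)[OF a] by (auto simp: abs_le_iff)
  qed
  ultimately show ?thesis by (auto simp: abs_le_iff)
qed

lemma INF_diff_le:
  fixes f g :: "'b \<Rightarrow> real"
  assumes "A \<noteq> {}" "\<And>a. a \<in> A \<Longrightarrow> \<bar>f a\<bar> \<le> B1" "\<And>a. a \<in> A \<Longrightarrow> \<bar>g a\<bar> \<le> B2"
    "\<And>a. a \<in> A \<Longrightarrow> \<bar>f a - g a\<bar> \<le> e"
  shows "\<bar>(INF a\<in>A. f a) - (INF a\<in>A. g a)\<bar> \<le> e"
proof -
  have bf: "bdd_below (f ` A)"
  proof (rule bdd_belowI2[where m="-B1"])
    fix x assume "x \<in> A" then show "-B1 \<le> f x" using assms(2)[of x] by (auto simp: abs_le_iff)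
  qed
  have bg: "bdd_below (g ` A)"
  proof (rule bdd_belowI2[where m="-B2"])
    fix x assume "x \<in> A" then show "-B2 \<le> g x" using assms(3)[of x] by (auto simp: abs_le_iff)
  qed
  have "(INF a\<in>A. g a) - e \<le> (INF a\<in>A. f a)"
  proof (rule cINF_greatest[OF assms(1)])
    fix a assume a: "a \<in> A"
    have "(INF a\<in>A. g a) \<le> g a" by (rule cINF_lower[OF bg a])
    then show "(INF a\<in>A. g a) - e \<le> f a" using assms(4)[OF a] by (auto simp: abs_le_iff)
  qed
  moreover have "(INF a\<in>A. f a) - e \<le> (INF a\<in>A. g a)"
  proof (rule cINF_greatest[OF assms(1)])
    fix a assume a: "a \<in> A"
    have "(INF a\<in>A. f a) \<le> f a" by (rule cINF_lower[OF bf a])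
    then show "(INF a\<in>A. f a) - e \<le> g a" using assms(4)[OF a] by (auto simp: abs_le_iff)
  qed
  ultimately show ?thesis by (auto simp: abs_le_iff)
qed

lemma eval_bounded:
  assumes S: "is_structure L M"
  shows "wf_fml L \<phi> \<Longrightarrow> \<exists>B. \<forall>s. (\<forall>i. s i \<in> univ M) \<longrightarrow> \<bar>eval M s \<phi>\<bar> \<le> B"
proof (induction \<phi>)
  case One then show ?case by auto
next
  case (Dist t1 t2)
  have "\<bar>eval M s (Dist t1 t2)\<bar> \<le> 1" if "\<forall>i. s i \<in> univ M" for s
    using teval_in[OF S that] Dist S unfolding is_structure_def by auto
  then show ?case by blast
next
  case (Rel R ts)
  obtain u0 where u0: "u0 \<in> univ M" using S unfolding is_structure_def by auto
  define bs0 where "bs0 = replicate (rarity L R) u0"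
  have "\<bar>eval M s (Rel R ts)\<bar> \<le> \<bar>rint M R bs0\<bar> + \<bar>rlip L R\<bar> * rarity L R"
    if s: "\<forall>i. s i \<in> univ M" for s
  proof -
    let ?as = "map (teval M s) ts"
    have as: "set ?as \<subseteq> univ M" "length ?as = rarity L R" using teval_in[OF S s] Rel by auto
    have bs: "set bs0 \<subseteq> univ M" "length bs0 = rarity L R" using u0 by (auto simp: bs0_def)
    have "\<bar>rint M R ?as - rint M R bs0\<bar> \<le> rlip L R * list_dist ?as bs0"
      using S as bs unfolding is_structure_def by blast
    also have "\<dots> \<le> \<bar>rlip L R\<bar> * list_dist ?as bs0"
      using list_dist_nonneg by (intro mult_right_mono) auto
    also have "\<dots> \<le> \<bar>rlip L R\<bar> * rarity L R"
      using list_dist_le[of ?as bs0 "univ M"] as bs S unfolding is_structure_def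
      by (intro mult_left_mono) auto
    finally show ?thesis by simp
  qed
  then show ?case by blast
next
  case (Plus \<phi>1 \<phi>2)
  then obtain B1 B2 where B1: "\<forall>s. (\<forall>i. s i \<in> univ M) \<longrightarrow> \<bar>eval M s \<phi>1\<bar> \<le> B1"
      and B2: "\<forall>s. (\<forall>i. s i \<in> univ M) \<longrightarrow> \<bar>eval M s \<phi>2\<bar> \<le> B2" by auto
  have "\<forall>s. (\<forall>i. s i \<in> univ M) \<longrightarrow> \<bar>eval M s (Plus \<phi>1 \<phi>2)\<bar> \<le> B1 + B2"
  proof (intro allI impI)
    fix s :: "nat \<Rightarrow> _" assume "\<forall>i. s i \<in> univ M"
    then have "\<bar>eval M s \<phi>1\<bar> \<le> B1" "\<bar>eval M s \<phi>2\<bar> \<le> B2" using B1 B2 by auto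
    then show "\<bar>eval M s (Plus \<phi>1 \<phi>2)\<bar> \<le> B1 + B2" by simp
  qed
  then show ?case by blast
next
  case (Scale r \<phi>)
  then obtain B where B: "\<forall>s. (\<forall>i. s i \<in> univ M) \<longrightarrow> \<bar>eval M s \<phi>\<bar> \<le> B" by auto
  have "\<forall>s. (\<forall>i. s i \<in> univ M) \<longrightarrow> \<bar>eval M s (Scale r \<phi>)\<bar> \<le> \<bar>r\<bar> * B"
    using B by (simp add: abs_mult mult_left_mono)
  then show ?case by blast
next
  case (Sup x \<phi>)
  then obtain B where B: "\<forall>s. (\<forall>i. s i \<in> univ M) \<longrightarrow> \<bar>eval M s \<phi>\<bar> \<le> B" by auto
  have ne: "univ M \<noteq> {}" using S unfolding is_structure_def by auto
  have "\<forall>s. (\<forall>i. s i \<in> univ M) \<longrightarrow> \<bar>eval M s (Sup x \<phi>)\<bar> \<le> B"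
    using B ne by (auto intro!: abs_SUP_le)
  then show ?case by blast
next
  case (Inf x \<phi>)
  then obtain B where B: "\<forall>s. (\<forall>i. s i \<in> univ M) \<longrightarrow> \<bar>eval M s \<phi>\<bar> \<le> B" by auto
  have ne: "univ M \<noteq> {}" using S unfolding is_structure_def by auto
  have "\<forall>s. (\<forall>i. s i \<in> univ M) \<longrightarrow> \<bar>eval M s (Inf x \<phi>)\<bar> \<le> B"
    using B ne by (auto intro!: abs_INF_le)
  then show ?case by blast
qed


lemma dist_dist_diff:
  fixes a b a' b' :: "'a::metric_space"
  shows "\<bar>dist a b - dist a' b'\<bar> \<le> dist a a' + dist b b'"
proof -
  have "dist a b \<le> dist a a' + dist a' b'  + dist b b'"
    by (metis add.commute add_left_mono dist_commute dist_triangle order_trans)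
  moreover have "dist a' b' \<le> dist a a' + dist a b  + dist b b'"
    by (metis add.commute add_left_mono dist_commute dist_triangle order_trans)
  ultimately show ?thesis by (auto simp: abs_le_iff)
qed

lemma struc_fLip: "is_structure L M \<Longrightarrow> length as = farity L f \<Longrightarrow> length bs = farity L f \<Longrightarrow>
  set as \<subseteq> univ M \<Longrightarrow> set bs \<subseteq> univ M \<Longrightarrow> dist (fint M f as) (fint M f bs) \<le> flip L f * list_dist as bs"
  unfolding is_structure_def by blast

lemma struc_rLip: "is_structure L M \<Longrightarrow> length as = rarity L R \<Longrightarrow> length bs = rarity L R \<Longrightarrow>
  set as \<subseteq> univ M \<Longrightarrow> set bs \<subseteq> univ M \<Longrightarrow> \<bar>rint M R as - rint M R bs\<bar> \<le> rlip L R * list_dist as bs"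
  unfolding is_structure_def by blast

lemma teval_lip:
  assumes S: "is_structure L M"
  shows "wf_trm L t \<Longrightarrow> \<exists>C\<ge>0. \<forall>V s s'. finite V \<longrightarrow> tvars t \<subseteq> V \<longrightarrow> (\<forall>i. s i \<in> univ M) \<longrightarrow>
     (\<forall>i. s' i \<in> univ M) \<longrightarrow> dist (teval M s t) (teval M s' t) \<le> C * (\<Sum>i\<in>V. dist (s i) (s' i))"
proof (induction t)
  case (Var i)
  have "dist (s i) (s' i) \<le> 1 * (\<Sum>i\<in>V. dist (s i) (s' i))" if "finite V" "i \<in> V" for V and s s' :: "nat \<Rightarrow> _"
    using member_le_sum[of i V "\<lambda>i. dist (s i) (s' i)"] that by auto
  then show ?case by (intro exI[of _ 1]) auto
next
  case (Fn f ts)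
  have "\<forall>t\<in>set ts. \<exists>C\<ge>0. \<forall>V s s'. finite V \<longrightarrow> tvars t \<subseteq> V \<longrightarrow> (\<forall>i. s i \<in> univ M) \<longrightarrow>
     (\<forall>i. s' i \<in> univ M) \<longrightarrow> dist (teval M s t) (teval M s' t) \<le> C * (\<Sum>i\<in>V. dist (s i) (s' i))"
    using Fn by auto
  then obtain Cf where Cf: "\<And>t. t \<in> set ts \<Longrightarrow> Cf t \<ge> 0 \<and> (\<forall>V s s'. finite V \<longrightarrow> tvars t \<subseteq> V \<longrightarrow> (\<forall>i. s i \<in> univ M) \<longrightarrow>
     (\<forall>i. s' i \<in> univ M) \<longrightarrow> dist (teval M s t) (teval M s' t) \<le> Cf t * (\<Sum>i\<in>V. dist (s i) (s' i)))"
    by metis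
  define C where "C = \<bar>flip L f\<bar> * (\<Sum>j<length ts. Cf (ts!j))"
  have C0: "C \<ge> 0" unfolding C_def using Cf[OF nth_mem] by (auto intro!: sum_nonneg mult_nonneg_nonneg)
  have "dist (teval M s (Fn f ts)) (teval M s' (Fn f ts)) \<le> C * (\<Sum>i\<in>V. dist (s i) (s' i))"
    if V: "finite V" "tvars (Fn f ts) \<subseteq> V" and s: "\<forall>i. s i \<in> univ M" and s': "\<forall>i. s' i \<in> univ M"
    for V s s'
  proof -
    let ?D = "\<Sum>i\<in>V. dist (s i) (s' i)"
    have ld: "list_dist (map (teval M s) ts) (map (teval M s') ts) \<le> (\<Sum>j<length ts. Cf (ts!j)) * ?D"
    proof (rule list_dist_map_le)
      fix j assume "j < length ts"
      then have "ts ! j \<in> set ts" by simp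
      then show "dist (teval M s (ts ! j)) (teval M s' (ts ! j)) \<le> Cf (ts ! j) * ?D"
        using Cf V s s' by auto
    qed
    have "dist (teval M s (Fn f ts)) (teval M s' (Fn f ts)) \<le> flip L f * list_dist (map (teval M s) ts) (map (teval M s') ts)"
    proof -
      have "set (map (teval M s) ts) \<subseteq> univ M" "set (map (teval M s') ts) \<subseteq> univ M"
        using teval_in[OF S s] teval_in[OF S s'] Fn.prems by auto
      then show ?thesis using struc_fLip[OF S] Fn.prems by simp
    qed
    also have "\<dots> \<le> \<bar>flip L f\<bar> * list_dist (map (teval M s) ts) (map (teval M s') ts)"
      using list_dist_nonneg by (intro mult_right_mono) auto
    also have "\<dots> \<le> \<bar>flip L f\<bar> * ((\<Sum>j<length ts. Cf (ts!j)) * ?D)"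
      using ld by (intro mult_left_mono) auto
    finally show ?thesis by (simp add: C_def)
  qed
  then show ?case using C0 by blast
qed

lemma sum_upd_le:
  assumes "finite V"
  shows "(\<Sum>i\<in>insert x V. dist ((s(x:=a)) i) ((s'(x:=a)) i)) \<le> (\<Sum>i\<in>V. dist (s i) (s' i))"
proof -
  have "(\<Sum>i\<in>insert x V. dist ((s(x:=a)) i) ((s'(x:=a)) i)) =
        dist a a + (\<Sum>i\<in>V - {x}. dist ((s(x:=a)) i) ((s'(x:=a)) i))"
    using assms by (simp add: sum.insert_remove)
  also have "(\<Sum>i\<in>V - {x}. dist ((s(x:=a)) i) ((s'(x:=a)) i)) = (\<Sum>i\<in>V - {x}. dist (s i) (s' i))"
    by (rule sum.cong) auto
  also have "\<dots> \<le> (\<Sum>i\<in>V. dist (s i) (s' i))"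
    using assms by (intro sum_mono2) auto
  finally show ?thesis by simp
qed

lemma eval_lip:
  assumes S: "is_structure L M"
  shows "wf_fml L \<phi> \<Longrightarrow> \<exists>C\<ge>0. \<forall>V s s'. finite V \<longrightarrow> fv \<phi> \<subseteq> V \<longrightarrow> (\<forall>i. s i \<in> univ M) \<longrightarrow>
     (\<forall>i. s' i \<in> univ M) \<longrightarrow> \<bar>eval M s \<phi> - eval M s' \<phi>\<bar> \<le> C * (\<Sum>i\<in>V. dist (s i) (s' i))"
proof (induction \<phi>)
  case One
  then show ?case by (intro exI[of _ 0]) auto
next
  case (Dist t1 t2)
  obtain C1 where C1: "C1 \<ge> 0" "\<forall>V s s'. finite V \<longrightarrow> tvars t1 \<subseteq> V \<longrightarrow> (\<forall>i. s i \<in> univ M) \<longrightarrow>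
     (\<forall>i. s' i \<in> univ M) \<longrightarrow> dist (teval M s t1) (teval M s' t1) \<le> C1 * (\<Sum>i\<in>V. dist (s i) (s' i))"
    using teval_lip[OF S, of t1] Dist by auto
  obtain C2 where C2: "C2 \<ge> 0" "\<forall>V s s'. finite V \<longrightarrow> tvars t2 \<subseteq> V \<longrightarrow> (\<forall>i. s i \<in> univ M) \<longrightarrow>
     (\<forall>i. s' i \<in> univ M) \<longrightarrow> dist (teval M s t2) (teval M s' t2) \<le> C2 * (\<Sum>i\<in>V. dist (s i) (s' i))"
    using teval_lip[OF S, of t2] Dist by auto
  have "\<bar>eval M s (Dist t1 t2) - eval M s' (Dist t1 t2)\<bar> \<le> (C1 + C2) * (\<Sum>i\<in>V. dist (s i) (s' i))"
    if "finite V" "fv (Dist t1 t2) \<subseteq> V" "\<forall>i. s i \<in> univ M" "\<forall>i. s' i \<in> univ M" for V s s'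
  proof -
    have "\<bar>eval M s (Dist t1 t2) - eval M s' (Dist t1 t2)\<bar> \<le>
       dist (teval M s t1) (teval M s' t1) + dist (teval M s t2) (teval M s' t2)"
      using dist_dist_diff by simp
    also have "\<dots> \<le> C1 * (\<Sum>i\<in>V. dist (s i) (s' i)) + C2 * (\<Sum>i\<in>V. dist (s i) (s' i))"
      using C1 C2 that by (intro add_mono) auto
    finally show ?thesis by (simp add: algebra_simps)
  qed
  then show ?case using C1 C2 by (intro exI[of _ "C1 + C2"]) auto
next
  case (Rel R ts)
  have "\<forall>t\<in>set ts. \<exists>C\<ge>0. \<forall>V s s'. finite V \<longrightarrow> tvars t \<subseteq> V \<longrightarrow> (\<forall>i. s i \<in> univ M) \<longrightarrow>
     (\<forall>i. s' i \<in> univ M) \<longrightarrow> dist (teval M s t) (teval M s' t) \<le> C * (\<Sum>i\<in>V. dist (s i) (s' i))"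
    using Rel teval_lip[OF S] by auto
  then obtain Cf where Cf: "\<And>t. t \<in> set ts \<Longrightarrow> Cf t \<ge> 0 \<and> (\<forall>V s s'. finite V \<longrightarrow> tvars t \<subseteq> V \<longrightarrow> (\<forall>i. s i \<in> univ M) \<longrightarrow>
     (\<forall>i. s' i \<in> univ M) \<longrightarrow> dist (teval M s t) (teval M s' t) \<le> Cf t * (\<Sum>i\<in>V. dist (s i) (s' i)))"
    by metis
  define C where "C = \<bar>rlip L R\<bar> * (\<Sum>j<length ts. Cf (ts!j))"
  have C0: "C \<ge> 0" unfolding C_def using Cf[OF nth_mem] by (auto intro!: sum_nonneg mult_nonneg_nonneg)
  have "\<bar>eval M s (Rel R ts) - eval M s' (Rel R ts)\<bar> \<le> C * (\<Sum>i\<in>V. dist (s i) (s' i))"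
    if V: "finite V" "fv (Rel R ts) \<subseteq> V" and s: "\<forall>i. s i \<in> univ M" and s': "\<forall>i. s' i \<in> univ M"
    for V s s'
  proof -
    let ?D = "\<Sum>i\<in>V. dist (s i) (s' i)"
    have ld: "list_dist (map (teval M s) ts) (map (teval M s') ts) \<le> (\<Sum>j<length ts. Cf (ts!j)) * ?D"
    proof (rule list_dist_map_le)
      fix j assume "j < length ts"
      then have "ts ! j \<in> set ts" by simp
      then show "dist (teval M s (ts ! j)) (teval M s' (ts ! j)) \<le> Cf (ts ! j) * ?D"
        using Cf V s s' by auto
    qed
    have "\<bar>eval M s (Rel R ts) - eval M s' (Rel R ts)\<bar> \<le> rlip L R * list_dist (map (teval M s) ts) (map (teval M s') ts)"
    proof -
      have "set (map (teval M s) ts) \<subseteq> univ M" "set (map (teval M s') ts) \<subseteq> univ M"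
        using teval_in[OF S s] teval_in[OF S s'] Rel.prems by auto
      then show ?thesis using struc_rLip[OF S] Rel.prems by simp
    qed
    also have "\<dots> \<le> \<bar>rlip L R\<bar> * list_dist (map (teval M s) ts) (map (teval M s') ts)"
      using list_dist_nonneg by (intro mult_right_mono) auto
    also have "\<dots> \<le> \<bar>rlip L R\<bar> * ((\<Sum>j<length ts. Cf (ts!j)) * ?D)"
      using ld by (intro mult_left_mono) auto
    finally show ?thesis by (simp add: C_def)
  qed
  then show ?case using C0 by blast
next
  case (Plus \<phi>1 \<phi>2)
  then obtain C1 C2 where C1: "C1 \<ge> 0" "\<forall>V s s'. finite V \<longrightarrow> fv \<phi>1 \<subseteq> V \<longrightarrow> (\<forall>i. s i \<in> univ M) \<longrightarrow>
     (\<forall>i. s' i \<in> univ M) \<longrightarrow> \<bar>eval M s \<phi>1 - eval M s' \<phi>1\<bar> \<le> C1 * (\<Sum>i\<in>V. dist (s i) (s' i))"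
    and C2: "C2 \<ge> 0" "\<forall>V s s'. finite V \<longrightarrow> fv \<phi>2 \<subseteq> V \<longrightarrow> (\<forall>i. s i \<in> univ M) \<longrightarrow>
     (\<forall>i. s' i \<in> univ M) \<longrightarrow> \<bar>eval M s \<phi>2 - eval M s' \<phi>2\<bar> \<le> C2 * (\<Sum>i\<in>V. dist (s i) (s' i))"
    by auto
  have "\<bar>eval M s (Plus \<phi>1 \<phi>2) - eval M s' (Plus \<phi>1 \<phi>2)\<bar> \<le> (C1 + C2) * (\<Sum>i\<in>V. dist (s i) (s' i))"
    if "finite V" "fv (Plus \<phi>1 \<phi>2) \<subseteq> V" "\<forall>i. s i \<in> univ M" "\<forall>i. s' i \<in> univ M" for V s s'
  proof -
    have "\<bar>eval M s \<phi>1 - eval M s' \<phi>1\<bar> \<le> C1 * (\<Sum>i\<in>V. dist (s i) (s' i))"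
         "\<bar>eval M s \<phi>2 - eval M s' \<phi>2\<bar> \<le> C2 * (\<Sum>i\<in>V. dist (s i) (s' i))"
      using C1 C2 that by auto
    then show ?thesis by (simp add: algebra_simps abs_le_iff)
  qed
  then show ?case using C1 C2 by (intro exI[of _ "C1 + C2"]) auto
next
  case (Scale r \<phi>)
  then obtain C where C: "C \<ge> 0" "\<forall>V s s'. finite V \<longrightarrow> fv \<phi> \<subseteq> V \<longrightarrow> (\<forall>i. s i \<in> univ M) \<longrightarrow>
     (\<forall>i. s' i \<in> univ M) \<longrightarrow> \<bar>eval M s \<phi> - eval M s' \<phi>\<bar> \<le> C * (\<Sum>i\<in>V. dist (s i) (s' i))"
    by auto
  have "\<bar>eval M s (Scale r \<phi>) - eval M s' (Scale r \<phi>)\<bar> \<le> (\<bar>r\<bar> * C) * (\<Sum>i\<in>V. dist (s i) (s' i))"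
    if "finite V" "fv (Scale r \<phi>) \<subseteq> V" "\<forall>i. s i \<in> univ M" "\<forall>i. s' i \<in> univ M" for V s s'
  proof -
    have "\<bar>eval M s \<phi> - eval M s' \<phi>\<bar> \<le> C * (\<Sum>i\<in>V. dist (s i) (s' i))"
      using C that by auto
    then have "\<bar>r\<bar> * \<bar>eval M s \<phi> - eval M s' \<phi>\<bar> \<le> \<bar>r\<bar> * (C * (\<Sum>i\<in>V. dist (s i) (s' i)))"
      by (intro mult_left_mono) auto
    moreover have "\<bar>r * eval M s \<phi> - r * eval M s' \<phi>\<bar> = \<bar>r\<bar> * \<bar>eval M s \<phi> - eval M s' \<phi>\<bar>"
      by (metis abs_mult right_diff_distrib)
    ultimately show ?thesis by (simp add: mult.assoc)
  qed
  then show ?case using C by (intro exI[of _ "\<bar>r\<bar> * C"]) auto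
next
  case (Sup x \<phi>)
  have wf: "wf_fml L \<phi>" using Sup.prems by simp
  obtain C where C: "C \<ge> 0" "\<forall>V s s'. finite V \<longrightarrow> fv \<phi> \<subseteq> V \<longrightarrow> (\<forall>i. s i \<in> univ M) \<longrightarrow>
     (\<forall>i. s' i \<in> univ M) \<longrightarrow> \<bar>eval M s \<phi> - eval M s' \<phi>\<bar> \<le> C * (\<Sum>i\<in>V. dist (s i) (s' i))"
    using Sup.IH[OF wf] by blast
  obtain B where B: "\<forall>s. (\<forall>i. s i \<in> univ M) \<longrightarrow> \<bar>eval M s \<phi>\<bar> \<le> B"
    using eval_bounded[OF S wf] by blast
  have ne: "univ M \<noteq> {}" using S unfolding is_structure_def by auto
  have "\<bar>eval M s (Sup x \<phi>) - eval M s' (Sup x \<phi>)\<bar> \<le> C * (\<Sum>i\<in>V. dist (s i) (s' i))"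
    if V: "finite V" "fv (Sup x \<phi>) \<subseteq> V" and s: "\<forall>i. s i \<in> univ M" and s': "\<forall>i. s' i \<in> univ M" for V s s'
  proof -
    have "\<bar>(SUP a\<in>univ M. eval M (s(x:=a)) \<phi>) - (SUP a\<in>univ M. eval M (s'(x:=a)) \<phi>)\<bar> \<le> C * (\<Sum>i\<in>V. dist (s i) (s' i))"
    proof (rule SUP_diff_le[OF ne])
      fix a assume a: "a \<in> univ M"
      have ss: "\<forall>i. (s(x:=a)) i \<in> univ M" "\<forall>i. (s'(x:=a)) i \<in> univ M" using a s s' by auto
      show "\<bar>eval M (s(x:=a)) \<phi>\<bar> \<le> B" using B ss(1) by blast
      show "\<bar>eval M (s'(x:=a)) \<phi>\<bar> \<le> B" using B ss(2) by blast
      have "\<bar>eval M (s(x:=a)) \<phi> - eval M (s'(x:=a)) \<phi>\<bar> \<le> C * (\<Sum>i\<in>insert x V. dist ((s(x:=a)) i) ((s'(x:=a)) i))"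
      proof (rule C(2)[rule_format, of "insert x V" "s(x:=a)" "s'(x:=a)"])
        show "finite (insert x V)" using V by simp
        show "fv \<phi> \<subseteq> insert x V" using V by auto
      qed (use ss in \<open>blast+\<close>)
      also have "\<dots> \<le> C * (\<Sum>i\<in>V. dist (s i) (s' i))"
        using sum_upd_le[OF V(1)] C(1) by (intro mult_left_mono) auto
      finally show "\<bar>eval M (s(x:=a)) \<phi> - eval M (s'(x:=a)) \<phi>\<bar> \<le> C * (\<Sum>i\<in>V. dist (s i) (s' i))" .
    qed
    then show ?thesis by simp
  qed
  then show ?case using C by blast
next
  case (Inf x \<phi>)
  have wf: "wf_fml L \<phi>" using Inf.prems by simp
  obtain C where C: "C \<ge> 0" "\<forall>V s s'. finite V \<longrightarrow> fv \<phi> \<subseteq> V \<longrightarrow> (\<forall>i. s i \<in> univ M) \<longrightarrow>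
     (\<forall>i. s' i \<in> univ M) \<longrightarrow> \<bar>eval M s \<phi> - eval M s' \<phi>\<bar> \<le> C * (\<Sum>i\<in>V. dist (s i) (s' i))"
    using Inf.IH[OF wf] by blast
  obtain B where B: "\<forall>s. (\<forall>i. s i \<in> univ M) \<longrightarrow> \<bar>eval M s \<phi>\<bar> \<le> B"
    using eval_bounded[OF S wf] by blast
  have ne: "univ M \<noteq> {}" using S unfolding is_structure_def by auto
  have "\<bar>eval M s (Inf x \<phi>) - eval M s' (Inf x \<phi>)\<bar> \<le> C * (\<Sum>i\<in>V. dist (s i) (s' i))"
    if V: "finite V" "fv (Inf x \<phi>) \<subseteq> V" and s: "\<forall>i. s i \<in> univ M" and s': "\<forall>i. s' i \<in> univ M" for V s s'
  proof -
    have "\<bar>(INF a\<in>univ M. eval M (s(x:=a)) \<phi>) - (INF a\<in>univ M. eval M (s'(x:=a)) \<phi>)\<bar> \<le> C * (\<Sum>i\<in>V. dist (s i) (s' i))"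
    proof (rule INF_diff_le[OF ne])
      fix a assume a: "a \<in> univ M"
      have ss: "\<forall>i. (s(x:=a)) i \<in> univ M" "\<forall>i. (s'(x:=a)) i \<in> univ M" using a s s' by auto
      show "\<bar>eval M (s(x:=a)) \<phi>\<bar> \<le> B" using B ss(1) by blast
      show "\<bar>eval M (s'(x:=a)) \<phi>\<bar> \<le> B" using B ss(2) by blast
      have "\<bar>eval M (s(x:=a)) \<phi> - eval M (s'(x:=a)) \<phi>\<bar> \<le> C * (\<Sum>i\<in>insert x V. dist ((s(x:=a)) i) ((s'(x:=a)) i))"
      proof (rule C(2)[rule_format, of "insert x V" "s(x:=a)" "s'(x:=a)"])
        show "finite (insert x V)" using V by simp
        show "fv \<phi> \<subseteq> insert x V" using V by auto
      qed (use ss in \<open>blast+\<close>)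
      also have "\<dots> \<le> C * (\<Sum>i\<in>V. dist (s i) (s' i))"
        using sum_upd_le[OF V(1)] C(1) by (intro mult_left_mono) auto
      finally show "\<bar>eval M (s(x:=a)) \<phi> - eval M (s'(x:=a)) \<phi>\<bar> \<le> C * (\<Sum>i\<in>V. dist (s i) (s' i))" .
    qed
    then show ?thesis by simp
  qed
  then show ?case using C by blast
qed

lemma fv_infs: "fv (infs n \<phi>) = fv \<phi> - {..<n}"
  by (induction n arbitrary: \<phi>) (auto simp: lessThan_Suc)

lemma wf_infs: "wf_fml L (infs n \<phi>) = wf_fml L \<phi>"
  by (induction n arbitrary: \<phi>) auto

lemma infs_le:
  assumes S: "is_structure L M" and s: "\<forall>i. s i \<in> univ M"
  shows "wf_fml L \<phi> \<Longrightarrow> \<forall>i. a i \<in> univ M \<Longrightarrow> \<forall>i\<ge>n. a i = s i \<Longrightarrow> eval M s (infs n \<phi>) \<le> eval M a \<phi>"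
proof (induction n arbitrary: \<phi> a)
  case 0
  then have "a = s" by auto
  then show ?case by simp
next
  case (Suc n)
  define a' where "a' = a(n := s n)"
  have a': "\<forall>i. a' i \<in> univ M" "\<forall>i\<ge>n. a' i = s i" using Suc.prems s by (auto simp: a'_def)
  have "eval M s (infs (Suc n) \<phi>) = eval M s (infs n (Inf n \<phi>))" by simp
  also have "\<dots> \<le> eval M a' (Inf n \<phi>)" using Suc.IH[of "Inf n \<phi>" a'] Suc.prems a' by simp
  also have "\<dots> = (INF b\<in>univ M. eval M (a'(n:=b)) \<phi>)" by simp
  also have "\<dots> \<le> eval M (a'(n := a n)) \<phi>"
  proof (rule cINF_lower)
    obtain B where B: "\<forall>s. (\<forall>i. s i \<in> univ M) \<longrightarrow> \<bar>eval M s \<phi>\<bar> \<le> B"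
      using eval_bounded[OF S Suc.prems(1)] by blast
    show "bdd_below ((\<lambda>b. eval M (a'(n:=b)) \<phi>) ` univ M)"
    proof (rule bdd_belowI2[where m="-B"])
      fix b assume "b \<in> univ M"
      then have "\<forall>i. (a'(n:=b)) i \<in> univ M" using a' by auto
      then have "\<bar>eval M (a'(n:=b)) \<phi>\<bar> \<le> B" using B by blast
      then show "-B \<le> eval M (a'(n:=b)) \<phi>" by linarith
    qed
    show "a n \<in> univ M" using Suc.prems by auto
  qed
  also have "a'(n := a n) = a" by (auto simp: a'_def)
  finally show ?case .
qed

lemma infs_ge:
  assumes ne: "univ M \<noteq> {}"
  shows "\<forall>a. (\<forall>i. a i \<in> univ M) \<longrightarrow> 0 \<le> eval M a \<phi> \<Longrightarrow> \<forall>i. s i \<in> univ M \<Longrightarrow> 0 \<le> eval M s (infs n \<phi>)"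
proof (induction n arbitrary: \<phi> s)
  case 0 then show ?case by simp
next
  case (Suc n)
  have "\<forall>a. (\<forall>i. a i \<in> univ M) \<longrightarrow> 0 \<le> eval M a (Inf n \<phi>)"
  proof (intro allI impI)
    fix a :: "nat \<Rightarrow> _" assume a: "\<forall>i. a i \<in> univ M"
    show "0 \<le> eval M a (Inf n \<phi>)"
      unfolding eval.simps
    proof (rule cINF_greatest[OF ne])
      fix b assume "b \<in> univ M"
      then have "\<forall>i. (a(n:=b)) i \<in> univ M" using a by auto
      then show "0 \<le> eval M (a(n:=b)) \<phi>" using Suc.prems by auto
    qed
  qed
  then show ?case using Suc.IH Suc.prems by simp
qed

lemma Tnonneg_iff:
  assumes Mo: "models L M T" and phi: "\<phi> \<in> fmls L n"
  shows "T_nonneg T n \<phi> \<longleftrightarrow> (\<forall>a. (\<forall>i. a i \<in> univ M) \<longrightarrow> 0 \<le> eval M a \<phi>)"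
proof -
  have S: "is_structure L M" using Mo unfolding models_def by auto
  have ne: "univ M \<noteq> {}" using S unfolding is_structure_def by auto
  have sent: "infs n \<phi> \<in> sentences L"
    using phi unfolding sentences_def fmls_def by (auto simp: fv_infs wf_infs)
  have TT: "\<And>s. \<forall>i. s i \<in> univ M \<Longrightarrow> eval M s (infs n \<phi>) = T (infs n \<phi>)"
    using Mo sent unfolding models_def by auto
  obtain u0 where u0: "u0 \<in> univ M" using ne by auto
  show ?thesis
  proof
    assume "T_nonneg T n \<phi>"
    then have T0: "0 \<le> T (infs n \<phi>)" unfolding T_nonneg_def .
    show "\<forall>a. (\<forall>i. a i \<in> univ M) \<longrightarrow> 0 \<le> eval M a \<phi>"
    proof (intro allI impI)
      fix a :: "nat \<Rightarrow> _" assume a: "\<forall>i. a i \<in> univ M"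
      have "eval M a (infs n \<phi>) \<le> eval M a \<phi>"
        using infs_le[OF S a, of \<phi> a n] phi a unfolding fmls_def by auto
      then show "0 \<le> eval M a \<phi>" using TT[OF a] T0 by simp
    qed
  next
    assume H: "\<forall>a. (\<forall>i. a i \<in> univ M) \<longrightarrow> 0 \<le> eval M a \<phi>"
    have s0: "\<forall>i. (\<lambda>_. u0) i \<in> univ M" using u0 by auto
    have "0 \<le> eval M (\<lambda>_. u0) (infs n \<phi>)" using infs_ge[OF ne H s0] .
    then show "T_nonneg T n \<phi>" unfolding T_nonneg_def using TT[OF s0] by simp
  qed
qed

lemma compact_Asg:
  assumes "compact (U :: 'a::metric_space set)"
  shows "compact {a :: nat \<Rightarrow> 'a. \<forall>i. a i \<in> U}"
proof -
  have "compactin (product_topology (\<lambda>i::nat. euclidean) UNIV) (PiE UNIV (\<lambda>i. U))"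
    using assms by (simp add: compactin_PiE)
  moreover have "PiE UNIV (\<lambda>i::nat. U) = {a. \<forall>i. a i \<in> U}"
    by (auto simp: PiE_UNIV_domain)
  ultimately show ?thesis by (simp add: euclidean_product_topology)
qed

lemma open_sum_dist:
  fixes a :: "nat \<Rightarrow> 'a::metric_space"
  shows "open {b. (\<Sum>i<n. dist (b i) (a i)) < e}"
proof (rule open_Collect_less)
  show "continuous_on UNIV (\<lambda>b::nat \<Rightarrow> 'a. \<Sum>i<n. dist (b i) (a i))"
    by (intro continuous_on_sum continuous_on_dist continuous_on_product_coordinates continuous_on_const)
qed (rule continuous_on_const)

theorem mainTheorem18:
  fixes L :: "('f, 'r) lang"
    and T :: "('f, 'r) fml \<Rightarrow> real"
    and M :: "('a::metric_space, 'f, 'r) struc"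
    and n :: nat
    and p :: "('f, 'r) fml \<Rightarrow> real"
  assumes "models L M T"
    and "compact (univ M)"
    and "p \<in> extreme_types L T n"
  shows "\<exists>a. realizes L M n a p"
proof (rule ccontr)
  assume nr: "\<nexists>a. realizes L M n a p"
  have Mo: "models L M T" by fact
  have S: "is_structure L M" using Mo unfolding models_def by auto
  have ne: "univ M \<noteq> {}" using S unfolding is_structure_def by auto
  have pT: "p \<in> types L T n" and pext: "\<And>q r t. q \<in> types L T n \<Longrightarrow> r \<in> types L T n \<Longrightarrow> 0 < t \<Longrightarrow> t < 1 \<Longrightarrow>
      p = (\<lambda>\<phi>. t * q \<phi> + (1 - t) * r \<phi>) \<Longrightarrow> q = r"
    using assms(3) unfolding extreme_types_def extreme_pt_def mem_Collect_eq by blast+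
  have p0: "\<And>\<phi>. \<phi> \<notin> fmls L n \<Longrightarrow> p \<phi> = 0" and p1: "p One = 1"
    and padd: "\<And>\<phi> \<psi>. \<phi> \<in> fmls L n \<Longrightarrow> \<psi> \<in> fmls L n \<Longrightarrow> p (Plus \<phi> \<psi>) = p \<phi> + p \<psi>"
    and psc: "\<And>r \<phi>. \<phi> \<in> fmls L n \<Longrightarrow> p (Scale r \<phi>) = r * p \<phi>"
    and ppos0: "\<And>\<phi>. \<phi> \<in> fmls L n \<Longrightarrow> T_nonneg T n \<phi> \<Longrightarrow> 0 \<le> p \<phi>"
    using pT unfolding types_def mem_Collect_eq by blast+
  have fOne: "One \<in> fmls L n" unfolding fmls_def by simp
  have fPlus: "\<And>\<phi> \<psi>. \<phi> \<in> fmls L n \<Longrightarrow> \<psi> \<in> fmls L n \<Longrightarrow> Plus \<phi> \<psi> \<in> fmls L n"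
    unfolding fmls_def by simp
  have fScale: "\<And>r \<phi>. \<phi> \<in> fmls L n \<Longrightarrow> Scale r \<phi> \<in> fmls L n"
    unfolding fmls_def by simp
  define Asg where "Asg = {a :: nat \<Rightarrow> 'a. \<forall>i. a i \<in> univ M}"
  have ppos: "0 \<le> p \<phi>" if "\<phi> \<in> fmls L n" "\<forall>a\<in>Asg. 0 \<le> eval M a \<phi>" for \<phi>
  proof -
    have "T_nonneg T n \<phi>" unfolding Tnonneg_iff[OF Mo that(1)] using that(2) unfolding Asg_def by blast
    then show ?thesis using ppos0[OF that(1)] by blast
  qed
  have bnd: "\<exists>B. \<forall>a\<in>Asg. \<bar>eval M a \<phi>\<bar> \<le> B" if "\<phi> \<in> fmls L n" for \<phi>
  proof -
    have "wf_fml L \<phi>" using that unfolding fmls_def by simp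
    then obtain B where B: "\<forall>s. (\<forall>i. s i \<in> univ M) \<longrightarrow> \<bar>eval M s \<phi>\<bar> \<le> B"
      using eval_bounded[OF S] by blast
    show ?thesis unfolding Asg_def using B by blast
  qed
  have "\<exists>\<psi>. \<psi> \<in> fmls L n \<and> p \<psi> < eval M a \<psi>" if a: "a \<in> Asg" for a
  proof -
    have "\<not> realizes L M n a p" using nr by auto
    then obtain \<phi> where \<phi>: "\<phi> \<in> fmls L n" "p \<phi> \<noteq> eval M a \<phi>"
      using a unfolding realizes_def Asg_def by auto
    show ?thesis
    proof (cases "p \<phi> < eval M a \<phi>")
      case True then show ?thesis using \<phi> by blast
    next
      case False
      then have "p (Scale (-1) \<phi>) < eval M a (Scale (-1) \<phi>)" using \<phi> psc by auto
      then show ?thesis using fScale[OF \<phi>(1)] by blast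
    qed
  qed
  then have "\<forall>a\<in>Asg. \<exists>\<psi>. \<psi> \<in> fmls L n \<and> p \<psi> < eval M a \<psi>" by blast
  from bchoice[OF this] obtain \<psi> where \<psi>': "\<forall>a\<in>Asg. \<psi> a \<in> fmls L n \<and> p (\<psi> a) < eval M a (\<psi> a)"
    by blast
  have \<psi>: "\<And>a. a \<in> Asg \<Longrightarrow> \<psi> a \<in> fmls L n \<and> p (\<psi> a) < eval M a (\<psi> a)" using \<psi>' by blast
  define \<delta> where "\<delta> a = (eval M a (\<psi> a) - p (\<psi> a)) / 2" for a
  have \<delta>pos: "\<And>a. a \<in> Asg \<Longrightarrow> 0 < \<delta> a" using \<psi> unfolding \<delta>_def by auto
  have "\<exists>C\<ge>0. \<forall>s s'. s \<in> Asg \<longrightarrow> s' \<in> Asg \<longrightarrow>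
      \<bar>eval M s (\<psi> a) - eval M s' (\<psi> a)\<bar> \<le> C * (\<Sum>i<n. dist (s i) (s' i))" if a: "a \<in> Asg" for a
  proof -
    have wf: "wf_fml L (\<psi> a)" and fv: "fv (\<psi> a) \<subseteq> {..<n}" using \<psi>[OF a] unfolding fmls_def by auto
    obtain C where C: "C \<ge> 0" "\<forall>V s s'. finite V \<longrightarrow> fv (\<psi> a) \<subseteq> V \<longrightarrow> (\<forall>i. s i \<in> univ M) \<longrightarrow>
     (\<forall>i. s' i \<in> univ M) \<longrightarrow> \<bar>eval M s (\<psi> a) - eval M s' (\<psi> a)\<bar> \<le> C * (\<Sum>i\<in>V. dist (s i) (s' i))"
      using eval_lip[OF S wf] by blast
    have "\<forall>s s'. s \<in> Asg \<longrightarrow> s' \<in> Asg \<longrightarrow>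
      \<bar>eval M s (\<psi> a) - eval M s' (\<psi> a)\<bar> \<le> C * (\<Sum>i<n. dist (s i) (s' i))"
      unfolding Asg_def using C(2) fv finite_lessThan[of n] by blast
    then show ?thesis using C(1) by blast
  qed
  then have "\<forall>a\<in>Asg. \<exists>C. C \<ge> 0 \<and> (\<forall>s s'. s \<in> Asg \<longrightarrow> s' \<in> Asg \<longrightarrow>
      \<bar>eval M s (\<psi> a) - eval M s' (\<psi> a)\<bar> \<le> C * (\<Sum>i<n. dist (s i) (s' i)))" by blast
  from bchoice[OF this] obtain Cl where Cl': "\<forall>a\<in>Asg. Cl a \<ge> 0 \<and> (\<forall>s s'. s \<in> Asg \<longrightarrow> s' \<in> Asg \<longrightarrow>
      \<bar>eval M s (\<psi> a) - eval M s' (\<psi> a)\<bar> \<le> Cl a * (\<Sum>i<n. dist (s i) (s' i)))"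
    by blast
  have Cl: "\<And>a. a \<in> Asg \<Longrightarrow> Cl a \<ge> 0 \<and> (\<forall>s s'. s \<in> Asg \<longrightarrow> s' \<in> Asg \<longrightarrow>
      \<bar>eval M s (\<psi> a) - eval M s' (\<psi> a)\<bar> \<le> Cl a * (\<Sum>i<n. dist (s i) (s' i)))"
    using Cl' by blast
  define Nb where "Nb a = {b. (\<Sum>i<n. dist (b i) (a i)) < \<delta> a / (Cl a + 1)}" for a
  have openNb: "open (Nb a)" for a unfolding Nb_def by (rule open_sum_dist)
  have aNb: "a \<in> Nb a" if "a \<in> Asg" for a
    using \<delta>pos[OF that] Cl[OF that] unfolding Nb_def by simp
  have good: "p (\<psi> a) + \<delta> a \<le> eval M b (\<psi> a)" if a: "a \<in> Asg" and b: "b \<in> Asg" "b \<in> Nb a" for a b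
  proof -
    let ?D = "\<Sum>i<n. dist (a i) (b i)"
    have D0: "0 \<le> ?D" by (simp add: sum_nonneg)
    have "?D = (\<Sum>i<n. dist (b i) (a i))" by (simp add: dist_commute)
    then have "?D < \<delta> a / (Cl a + 1)" using b unfolding Nb_def by simp
    then have "(Cl a + 1) * ?D < \<delta> a" using Cl[OF a] by (simp add: field_simps)
    moreover have "Cl a * ?D \<le> (Cl a + 1) * ?D" using D0 by (simp add: algebra_simps)
    ultimately have k1: "Cl a * ?D \<le> \<delta> a" by linarith
    have "\<bar>eval M a (\<psi> a) - eval M b (\<psi> a)\<bar> \<le> Cl a * ?D" using Cl[OF a] a b by blast
    then have "eval M a (\<psi> a) - eval M b (\<psi> a) \<le> \<delta> a" using k1 by (meson abs_le_D1 order_trans)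
    moreover have "\<delta> a * 2 = eval M a (\<psi> a) - p (\<psi> a)" unfolding \<delta>_def by simp
    ultimately show ?thesis by linarith
  qed
  have cAsg: "compact Asg" unfolding Asg_def by (rule compact_Asg[OF assms(2)])
  have "Asg \<subseteq> (\<Union>a\<in>Asg. Nb a)" using aNb by auto
  then obtain X where X: "X \<subseteq> Asg" "finite X" "Asg \<subseteq> (\<Union>x\<in>X. Nb x)"
    by (rule compactE_image[OF cAsg openNb])
  define D where "D x = Asg \<inter> Nb x" for x
  define Z where "Z = Sigma X D"
  obtain u0 where u0: "u0 \<in> univ M" using ne by auto
  have covZ: "\<exists>x\<in>X. (x, y) \<in> Z" if "y \<in> Asg" for y
    using X(3) that unfolding Z_def D_def by auto
  have Zne: "Z \<noteq> {}" using covZ[of "\<lambda>_. u0"] u0 unfolding Asg_def by auto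
  have Zsnd: "snd z \<in> Asg" if "z \<in> Z" for z using that unfolding Z_def D_def by auto
  have Zfst: "fst z \<in> X" if "z \<in> Z" for z using that unfolding Z_def by auto
  define W where "W = {G :: ((nat \<Rightarrow> 'a) \<times> (nat \<Rightarrow> 'a)) \<Rightarrow> real. (\<forall>z. z \<notin> Z \<longrightarrow> G z = 0) \<and> (\<exists>B. \<forall>z. \<bar>G z\<bar> \<le> B)}"
  define P where "P G = (SUP z\<in>Z. G z)" for G :: "((nat \<Rightarrow> 'a) \<times> (nat \<Rightarrow> 'a)) \<Rightarrow> real"
  define sel where "sel R \<phi> = (\<lambda>z. if R z then eval M (snd z) \<phi> else 0)"
    for R :: "((nat \<Rightarrow> 'a) \<times> (nat \<Rightarrow> 'a)) \<Rightarrow> bool" and \<phi>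
  define full where "full \<phi> = sel (\<lambda>z. z \<in> Z) \<phi>" for \<phi>
  define SS where "SS = {full \<phi> | \<phi>. \<phi> \<in> fmls L n}"
  define f where "f G = p (SOME \<phi>. \<phi> \<in> fmls L n \<and> G = full \<phi>)" for G
  have Wbdd: "bdd_above (G ` Z)" if "G \<in> W" for G
  proof -
    note hyp = that
    obtain B where B: "\<forall>z. \<bar>G z\<bar> \<le> B" using hyp unfolding W_def mem_Collect_eq by blast
    have B': "G z \<le> B" for z using B abs_le_D1 by blast
    show ?thesis by (rule bdd_aboveI2[where M=B]) (rule B')
  qed
  have selW: "sel R \<phi> \<in> W" if "\<And>z. R z \<Longrightarrow> z \<in> Z" "\<phi> \<in> fmls L n" for R \<phi>
  proof -
    note hyp = that
    obtain B where B: "\<forall>a\<in>Asg. \<bar>eval M a \<phi>\<bar> \<le> B" using bnd[OF hyp(2)] by blast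
    have "\<bar>sel R \<phi> z\<bar> \<le> \<bar>B\<bar>" for z
      using B hyp(1)[of z] Zsnd[of z] unfolding sel_def by fastforce
    then have "\<forall>z. \<bar>sel R \<phi> z\<bar> \<le> \<bar>B\<bar>" by blast
    moreover have "\<forall>z. z \<notin> Z \<longrightarrow> sel R \<phi> z = 0" using hyp(1) unfolding sel_def by auto
    ultimately show ?thesis unfolding W_def by blast
  qed
  have sel_plus: "sel R (Plus \<phi> \<xi>) = (\<lambda>z. sel R \<phi> z + sel R \<xi> z)" for R \<phi> \<xi>
    unfolding sel_def by auto
  have sel_scale: "sel R (Scale c \<phi>) = (\<lambda>z. c * sel R \<phi> z)" for R c \<phi>
    unfolding sel_def by auto
  have Wadd: "(\<lambda>i. a i + b i) \<in> W" if "a \<in> W" "b \<in> W" for a b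
  proof -
    note hyp = that
    obtain B1 B2 where "\<forall>z. \<bar>a z\<bar> \<le> B1" "\<forall>z. \<bar>b z\<bar> \<le> B2" using hyp unfolding W_def by auto
    then have "\<forall>z. \<bar>a z + b z\<bar> \<le> B1 + B2" by (metis abs_triangle_ineq add_mono order_trans)
    then show ?thesis using that unfolding W_def by auto
  qed
  have Wsc: "(\<lambda>i. c * a i) \<in> W" if "a \<in> W" for a c
  proof -
    note hyp = that
    obtain B where "\<forall>z. \<bar>a z\<bar> \<le> B" using hyp unfolding W_def by auto
    then have "\<forall>z. \<bar>c * a z\<bar> \<le> \<bar>c\<bar> * B" by (simp add: abs_mult mult_left_mono)
    then show ?thesis using that unfolding W_def by auto
  qed
  have W0: "(\<lambda>z. 0) \<in> W" unfolding W_def by auto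
  have welldef: "p \<phi> = p \<phi>'" if "\<phi> \<in> fmls L n" "\<phi>' \<in> fmls L n" "full \<phi> = full \<phi>'" for \<phi> \<phi>'
  proof -
    have eq: "eval M a \<phi> = eval M a \<phi>'" if "a \<in> Asg" for a
    proof -
      note hyp = that
      obtain x where "(x, a) \<in> Z" using covZ[OF hyp] by blast
      then show ?thesis using fun_cong[OF \<open>full \<phi> = full \<phi>'\<close>, of "(x,a)"] unfolding full_def sel_def by simp
    qed
    have "0 \<le> p (Plus \<phi> (Scale (-1) \<phi>'))"
      using eq that by (intro ppos fPlus fScale) auto
    moreover have "0 \<le> p (Plus \<phi>' (Scale (-1) \<phi>))"
      using eq that by (intro ppos fPlus fScale) auto
    ultimately show ?thesis using that padd psc fScale by auto
  qed
  have f_full: "f (full \<phi>) = p \<phi>" if "\<phi> \<in> fmls L n" for \<phi>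
  proof -
    have "\<exists>\<xi>. \<xi> \<in> fmls L n \<and> full \<phi> = full \<xi>" using that by blast
    then have "(SOME \<xi>. \<xi> \<in> fmls L n \<and> full \<phi> = full \<xi>) \<in> fmls L n \<and>
               full \<phi> = full (SOME \<xi>. \<xi> \<in> fmls L n \<and> full \<phi> = full \<xi>)"
      by (rule someI_ex)
    then show ?thesis unfolding f_def using welldef that by metis
  qed
  have fullW: "full \<phi> \<in> W" if "\<phi> \<in> fmls L n" for \<phi>
    unfolding full_def using that by (intro selW) auto
  have "\<exists>g. (\<forall>a\<in>W. \<forall>b\<in>W. g (\<lambda>i. a i + b i) = g a + g b) \<and>
             (\<forall>c. \<forall>a\<in>W. g (\<lambda>i. c * a i) = c * g a) \<and>
             (\<forall>a\<in>SS. g a = f a) \<and> (\<forall>a\<in>W. g a \<le> P a)"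
  proof (rule HB)
    show "(\<lambda>i. a i + b i) \<in> W" if "a \<in> W" "b \<in> W" for a b using Wadd that .
    show "(\<lambda>i. c * a i) \<in> W" if "a \<in> W" for c a using Wsc that .
    show "(\<lambda>i. a i + b i) \<in> SS" if ab: "a \<in> SS" "b \<in> SS" for a b
    proof -
      obtain \<phi> \<xi> where h: "\<phi> \<in> fmls L n" "\<xi> \<in> fmls L n" "a = full \<phi>" "b = full \<xi>"
        using ab unfolding SS_def by blast
      then have "(\<lambda>i. a i + b i) = full (Plus \<phi> \<xi>)" unfolding full_def sel_plus by simp
      then show ?thesis unfolding SS_def using fPlus[OF h(1,2)] by blast
    qed
    show "(\<lambda>i. c * a i) \<in> SS" if ab: "a \<in> SS" for c a
    proof -
      obtain \<phi> where h: "\<phi> \<in> fmls L n" "a = full \<phi>"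
        using ab unfolding SS_def by blast
      then have "(\<lambda>i. c * a i) = full (Scale c \<phi>)" unfolding full_def sel_scale by simp
      then show ?thesis unfolding SS_def using fScale[OF h(1)] by blast
    qed
    have "full (Scale 0 One) = (\<lambda>i. 0)" unfolding full_def sel_scale by simp
    then have "\<exists>\<phi>. (\<lambda>i. 0) = full \<phi> \<and> \<phi> \<in> fmls L n"
      using fScale[OF fOne, of 0] by (intro exI[of _ "Scale 0 One"]) simp
    then show "(\<lambda>i. 0) \<in> SS" unfolding SS_def by blast
    show "SS \<subseteq> W" unfolding SS_def using fullW by auto
    show "f (\<lambda>i. a i + b i) = f a + f b" if ab: "a \<in> SS" "b \<in> SS" for a b
    proof -
      obtain \<phi> \<xi> where "\<phi> \<in> fmls L n" "\<xi> \<in> fmls L n" "a = full \<phi>" "b = full \<xi>"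
        using ab unfolding SS_def by blast
      moreover have "(\<lambda>i. full \<phi> i + full \<xi> i) = full (Plus \<phi> \<xi>)" unfolding full_def sel_plus by simp
      ultimately show ?thesis using f_full fPlus padd by simp
    qed
    show "f (\<lambda>i. c * a i) = c * f a" if "a \<in> SS" for c a
    proof -
      note hyp = that
      obtain \<phi> where "\<phi> \<in> fmls L n" "a = full \<phi>" using hyp unfolding SS_def by auto
      moreover have "(\<lambda>i. c * full \<phi> i) = full (Scale c \<phi>)" unfolding full_def sel_scale by simp
      ultimately show ?thesis using f_full fScale psc by simp
    qed
    show "P (\<lambda>i. a i + b i) \<le> P a + P b" if "a \<in> W" "b \<in> W" for a b
      unfolding P_def
    proof (rule cSUP_least[OF Zne])
      fix z assume z: "z \<in> Z"
      have "a z \<le> (SUP z\<in>Z. a z)" by (rule cSUP_upper[OF z Wbdd[OF that(1)]])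
      moreover have "b z \<le> (SUP z\<in>Z. b z)" by (rule cSUP_upper[OF z Wbdd[OF that(2)]])
      ultimately show "a z + b z \<le> (SUP z\<in>Z. a z) + (SUP z\<in>Z. b z)" by simp
    qed
    show "P (\<lambda>i. c * a i) = c * P a" if "a \<in> W" "0 \<le> c" for c a
    proof (cases "c = 0")
      case True then show ?thesis unfolding P_def using Zne by simp
    next
      case False
      then have c: "0 < c" using that by simp
      have le1: "(SUP z\<in>Z. c * a z) \<le> c * (SUP z\<in>Z. a z)"
      proof (rule cSUP_least[OF Zne])
        fix z assume z: "z \<in> Z"
        have "a z \<le> (SUP z\<in>Z. a z)" by (rule cSUP_upper[OF z Wbdd[OF that(1)]])
        then show "c * a z \<le> c * (SUP z\<in>Z. a z)" using c by simp
      qed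
      have le2: "(SUP z\<in>Z. a z) \<le> (SUP z\<in>Z. c * a z) / c"
      proof (rule cSUP_least[OF Zne])
        fix z assume z: "z \<in> Z"
        have "c * a z \<le> (SUP z\<in>Z. c * a z)" by (rule cSUP_upper[OF z Wbdd[OF Wsc[OF that(1)]]])
        then show "a z \<le> (SUP z\<in>Z. c * a z) / c" using c by (simp add: field_simps)
      qed
      show ?thesis unfolding P_def using le1 le2 c by (simp add: field_simps)
    qed
    show "f a \<le> P a" if "a \<in> SS" for a
    proof -
      note hyp = that
      obtain \<phi> where \<phi>: "\<phi> \<in> fmls L n" "a = full \<phi>" using hyp unfolding SS_def by auto
      define c where "c = (SUP z\<in>Z. full \<phi> z)"
      have "eval M y \<phi> \<le> c" if "y \<in> Asg" for y
      proof -
        note hyp = that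
        obtain x where x: "(x, y) \<in> Z" using covZ[OF hyp] by blast
        have "full \<phi> (x, y) \<le> c" unfolding c_def by (rule cSUP_upper[OF x Wbdd[OF fullW[OF \<phi>(1)]]])
        then show ?thesis using x unfolding full_def sel_def by simp
      qed
      then have "0 \<le> p (Plus (Scale c One) (Scale (-1) \<phi>))"
        using \<phi> by (intro ppos fPlus fScale fOne) auto
      then have "p \<phi> \<le> c" using padd psc fScale fOne \<phi> p1 by simp
      then show ?thesis using \<phi> f_full unfolding P_def c_def by simp
    qed
  qed
  then obtain g where gadd: "\<And>a b. a \<in> W \<Longrightarrow> b \<in> W \<Longrightarrow> g (\<lambda>i. a i + b i) = g a + g b"
    and gsc: "\<And>c a. a \<in> W \<Longrightarrow> g (\<lambda>i. c * a i) = c * g a"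
    and gS: "\<And>a. a \<in> SS \<Longrightarrow> g a = f a" and gP: "\<And>a. a \<in> W \<Longrightarrow> g a \<le> P a"
    by blast
  have gpos: "0 \<le> g G" if "G \<in> W" "\<forall>z\<in>Z. 0 \<le> G z" for G
  proof -
    have "g (\<lambda>i. (-1) * G i) \<le> P (\<lambda>i. (-1) * G i)" using gP Wsc that(1) by blast
    also have "\<dots> \<le> 0" unfolding P_def using that(2) by (intro cSUP_least[OF Zne]) auto
    finally show ?thesis using gsc[OF that(1), of "-1"] by simp
  qed
  have gfull: "g (full \<phi>) = p \<phi>" if "\<phi> \<in> fmls L n" for \<phi>
  proof -
    have "full \<phi> \<in> SS" unfolding SS_def using that by blast
    then show ?thesis using gS f_full[OF that] by simp
  qed
  have g_sel_plus: "g (sel R (Plus \<phi> \<xi>)) = g (sel R \<phi>) + g (sel R \<xi>)"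
    if "\<And>z. R z \<Longrightarrow> z \<in> Z" "\<phi> \<in> fmls L n" "\<xi> \<in> fmls L n" for R \<phi> \<xi>
    unfolding sel_plus using gadd selW that by blast
  have g_sel_scale: "g (sel R (Scale c \<phi>)) = c * g (sel R \<phi>)"
    if "\<And>z. R z \<Longrightarrow> z \<in> Z" "\<phi> \<in> fmls L n" for R c \<phi>
    unfolding sel_scale using gsc selW that by blast
  have g_sel_pos: "0 \<le> g (sel R \<phi>)"
    if "\<And>z. R z \<Longrightarrow> z \<in> Z" "\<phi> \<in> fmls L n" "\<forall>a\<in>Asg. 0 \<le> eval M a \<phi>" for R \<phi>
  proof (rule gpos[OF selW[OF that(1,2)]])
    show "\<forall>z\<in>Z. 0 \<le> sel R \<phi> z" using that(3) Zsnd unfolding sel_def by auto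
  qed blast
  have gsum: "(\<lambda>z. \<Sum>x\<in>F. h x z) \<in> W \<and> g (\<lambda>z. \<Sum>x\<in>F. h x z) = (\<Sum>x\<in>F. g (h x))"
    if "finite F" "\<forall>x\<in>F. h x \<in> W" for F h
    using that
  proof (induction F rule: finite_induct)
    case empty
    have "g (\<lambda>i. 0 * (\<lambda>z. 0) i) = 0 * g (\<lambda>z. 0)" by (rule gsc[OF W0])
    then show ?case using W0 by simp
  next
    case (insert x F)
    have eq: "(\<lambda>z. \<Sum>x\<in>insert x F. h x z) = (\<lambda>z. h x z + (\<Sum>x\<in>F. h x z))"
      using insert.hyps by auto
    show ?case unfolding eq using insert Wadd gadd by auto
  qed
  define piece where "piece x = (\<lambda>z. fst z = x \<and> z \<in> Z)" for x
  have pieceZ: "\<And>x z. piece x z \<Longrightarrow> z \<in> Z" unfolding piece_def by auto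
  have "full One = (\<lambda>z. \<Sum>x\<in>X. sel (piece x) One z)"
  proof
    fix z
    show "full One z = (\<Sum>x\<in>X. sel (piece x) One z)"
    proof (cases "z \<in> Z")
      case True
      have "(\<Sum>x\<in>X. sel (piece x) One z) = (\<Sum>x\<in>X. if fst z = x then 1 else 0)"
        using True unfolding sel_def piece_def by (intro sum.cong) auto
      also have "\<dots> = 1" using X(2) Zfst[OF True] by simp
      finally show ?thesis using True unfolding full_def sel_def by simp
    next
      case False
      then show ?thesis unfolding full_def sel_def piece_def by simp
    qed
  qed
  then have "(\<Sum>x\<in>X. g (sel (piece x) One)) = 1"
    using gsum[of X "\<lambda>x. sel (piece x) One"] X(2) selW[OF pieceZ fOne] gfull[OF fOne] p1 by simp
  then have "\<exists>x\<in>X. 0 < g (sel (piece x) One)"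
  proof (rule contrapos_pp)
    assume "\<not> (\<exists>x\<in>X. 0 < g (sel (piece x) One))"
    then have "\<forall>x\<in>X. g (sel (piece x) One) \<le> 0" by (simp add: not_less)
    then have "(\<Sum>x\<in>X. g (sel (piece x) One)) \<le> 0" by (intro sum_nonpos) blast
    then show "(\<Sum>x\<in>X. g (sel (piece x) One)) \<noteq> 1" by simp
  qed
  then obtain x0 where x0: "x0 \<in> X" "0 < g (sel (piece x0) One)" by blast
  have x0A: "x0 \<in> Asg" using x0(1) X(1) by auto
  define Rq where "Rq = piece x0"
  define Rr where "Rr = (\<lambda>z. fst z \<noteq> x0 \<and> z \<in> Z)"
  have RqZ: "\<And>z. Rq z \<Longrightarrow> z \<in> Z" unfolding Rq_def piece_def by auto
  have RrZ: "\<And>z. Rr z \<Longrightarrow> z \<in> Z" unfolding Rr_def by auto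
  define t where "t = g (sel Rq One)"
  have t0: "0 < t" using x0 unfolding t_def Rq_def by simp
  have decomp: "p \<phi> = g (sel Rq \<phi>) + g (sel Rr \<phi>)" if "\<phi> \<in> fmls L n" for \<phi>
  proof -
    have "full \<phi> = (\<lambda>z. sel Rq \<phi> z + sel Rr \<phi> z)"
      unfolding full_def sel_def Rq_def Rr_def piece_def by auto
    then show ?thesis using gfull[OF that] gadd selW[OF RqZ that] selW[OF RrZ that] by simp
  qed
  have typL: "(\<lambda>\<phi>. if \<phi> \<in> fmls L n then g (sel R \<phi>) / g (sel R One) else 0) \<in> types L T n"
    if RZ: "\<And>z. R z \<Longrightarrow> z \<in> Z" and pos: "0 < g (sel R One)" for R
    unfolding types_def
  proof (intro CollectI conjI allI ballI impI)
    show "(if One \<in> fmls L n then g (sel R One) / g (sel R One) else 0) = 1" using fOne pos by simp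
  next
    fix \<phi> \<xi> assume "\<phi> \<in> fmls L n" "\<xi> \<in> fmls L n"
    then show "(if Plus \<phi> \<xi> \<in> fmls L n then g (sel R (Plus \<phi> \<xi>)) / g (sel R One) else 0) =
      (if \<phi> \<in> fmls L n then g (sel R \<phi>) / g (sel R One) else 0) +
      (if \<xi> \<in> fmls L n then g (sel R \<xi>) / g (sel R One) else 0)"
      using g_sel_plus[OF RZ] fPlus by (simp add: add_divide_distrib)
  next
    fix r \<phi> assume "\<phi> \<in> fmls L n"
    then show "(if Scale r \<phi> \<in> fmls L n then g (sel R (Scale r \<phi>)) / g (sel R One) else 0) =
      r * (if \<phi> \<in> fmls L n then g (sel R \<phi>) / g (sel R One) else 0)"
      using g_sel_scale[OF RZ] fScale by simp
  next
    fix \<phi> assume \<phi>: "\<phi> \<in> fmls L n" "T_nonneg T n \<phi>"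
    then have "\<forall>a\<in>Asg. 0 \<le> eval M a \<phi>" using Tnonneg_iff[OF Mo \<phi>(1)] unfolding Asg_def by auto
    then have "0 \<le> g (sel R \<phi>)" using g_sel_pos[OF RZ \<phi>(1)] by blast
    then show "0 \<le> (if \<phi> \<in> fmls L n then g (sel R \<phi>) / g (sel R One) else 0)"
      using \<phi> pos by simp
  qed simp
  define q where "q \<phi> = (if \<phi> \<in> fmls L n then g (sel Rq \<phi>) / g (sel Rq One) else 0)" for \<phi>
  have qT: "q \<in> types L T n" unfolding q_def using typL[OF RqZ] t0 unfolding t_def by blast
  have rOne: "g (sel Rr One) = 1 - t" using decomp[OF fOne] p1 unfolding t_def by simp
  have qbig: "p (\<psi> x0) + \<delta> x0 \<le> q (\<psi> x0)"
  proof -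
    define c0 where "c0 = p (\<psi> x0) + \<delta> x0"
    have \<psi>0: "\<psi> x0 \<in> fmls L n" using \<psi>[OF x0A] by blast
    define \<xi> where "\<xi> = Plus (\<psi> x0) (Scale (-c0) One)"
    have \<xi>: "\<xi> \<in> fmls L n" unfolding \<xi>_def using \<psi>0 fOne fPlus fScale by blast
    have "\<forall>z\<in>Z. 0 \<le> sel Rq \<xi> z"
    proof
      fix z assume z: "z \<in> Z"
      show "0 \<le> sel Rq \<xi> z"
      proof (cases "Rq z")
        case True
        then have "fst z = x0" unfolding Rq_def piece_def by simp
        then have "snd z \<in> Asg" "snd z \<in> Nb x0" using z unfolding Z_def D_def by auto
        then have "c0 \<le> eval M (snd z) (\<psi> x0)" using good[OF x0A] unfolding c0_def by blast
        then show ?thesis using True unfolding sel_def \<xi>_def by simp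
      qed (simp add: sel_def)
    qed
    then have "0 \<le> g (sel Rq \<xi>)" using gpos selW[OF RqZ \<xi>] by blast
    also have "g (sel Rq \<xi>) = g (sel Rq (\<psi> x0)) + (-c0) * t"
      unfolding \<xi>_def t_def using g_sel_plus[OF RqZ \<psi>0 fScale[OF fOne]] g_sel_scale[OF RqZ fOne] by simp
    finally have "c0 * t \<le> g (sel Rq (\<psi> x0))" by simp
    then show ?thesis using t0 \<psi>0 unfolding q_def c0_def t_def by (simp add: field_simps)
  qed
  have pq: "p = q"
  proof (cases "t = 1")
    case True
    show ?thesis
    proof
      fix \<phi>
      show "p \<phi> = q \<phi>"
      proof (cases "\<phi> \<in> fmls L n")
        case False then show ?thesis using p0 unfolding q_def by simp
      next
        case \<phi>: True
        obtain B where B: "\<forall>a\<in>Asg. \<bar>eval M a \<phi>\<bar> \<le> B" using bnd[OF \<phi>] by blast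
        have "0 \<le> g (sel Rr (Plus (Scale B One) (Scale (-1) \<phi>)))"
          using B \<phi> by (intro g_sel_pos[OF RrZ] fPlus fScale fOne) (auto simp: abs_le_iff)
        moreover have "0 \<le> g (sel Rr (Plus (Scale B One) \<phi>))"
          using B \<phi> by (intro g_sel_pos[OF RrZ] fPlus fScale fOne) (auto simp: abs_le_iff)
        ultimately have "g (sel Rr \<phi>) = 0"
          using g_sel_plus[OF RrZ] g_sel_scale[OF RrZ] fScale fOne \<phi> rOne True by simp
        then show ?thesis using decomp[OF \<phi>] \<phi> True unfolding q_def t_def by simp
      qed
    qed
  next
    case False
    have "\<forall>z\<in>Z. 0 \<le> sel Rr One z" unfolding sel_def by simp
    then have "0 \<le> g (sel Rr One)" using gpos selW[OF RrZ fOne] by blast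
    then have t1: "t < 1" using rOne False by simp
    define r where "r \<phi> = (if \<phi> \<in> fmls L n then g (sel Rr \<phi>) / g (sel Rr One) else 0)" for \<phi>
    have rT: "r \<in> types L T n" unfolding r_def using typL[OF RrZ] t1 rOne by simp
    have pe: "p = (\<lambda>\<phi>. t * q \<phi> + (1 - t) * r \<phi>)"
    proof
      fix \<phi>
      show "p \<phi> = t * q \<phi> + (1 - t) * r \<phi>"
      proof (cases "\<phi> \<in> fmls L n")
        case False then show ?thesis using p0 unfolding q_def r_def by simp
      next
        case True then show ?thesis using decomp[OF True] t0 t1 rOne unfolding q_def r_def t_def by simp
      qed
    qed
    then have "q = r" using pext[OF qT rT t0 t1] by blast
    then show ?thesis using pe by (simp add: algebra_simps)
  qed
  show False using qbig pq \<delta>pos[OF x0A] by simp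
qed

end
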